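(* Let $\gamma>0$, let $V\in C_{p,\gamma}^{0}(\mathbb{R})$ and let $W$ be a continuous $\gamma$-periodic (possibly complex-valued) function, and set $\mathscr{L}\psi:=-\psi''+W\psi'+V\psi$ and $\bar{W}:=\frac{1}{\gamma}\int_{0}^{\gamma}W(s)\,ds$. If $\lambda\in\sigma_{g}^{1}(\mathscr{L})\cup\sigma_{g}^{2}(\mathscr{L})$, then $$\mathcal{A}(\lambda)=\{[\tfrac{1}{2\mathrm{i}}\bar{W}]_{\gamma}\}\quad\text{or}\quad\mathcal{A}(\lambda)=\{[\tfrac{1}{2\mathrm{i}}\bar{W}+\tfrac{\pi}{\gamma}]_{\gamma}\}.$$ If $\lambda\in\sigma_{g}^{3}(\mathscr{L})$, then $\mathcal{A}(\lambda)=\{[k_{1}]_{\gamma},[k_{2}]_{\gamma}\}$ with $[k_{1}+k_{2}]_{\gamma}=[\tfrac{1}{\mathrm{i}}\bar{W}]_{\gamma}$.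
   Context: $C_{p}^{0}(I)$: integrable piecewise-continuous functions on $I$ (finitely many discontinuities on each finite subinterval, one-sided improper integrals of $|f|$ converging at each discontinuity); $C_{p}^{l}(I)$: differentiable functions with derivative in $C_{p}^{l-1}(I)$; $C_{p,\gamma}^{l}(\mathbb{R})$: $\gamma$-periodic functions in $C_{p}^{l}(\mathbb{R})$; $[k]_{\gamma}=\{k+2m\pi/\gamma:m\in\mathbb{Z}\}$. Every solution in $C_p^2(\mathbb{R})$ of $\mathscr{L}\psi=\lambda\psi$ ($\lambda\in\mathbb{R}$) has one of the forms (a) $e^{\mathrm{i}k_0x}p(x)$, (b) $e^{\mathrm{i}k_0x}(p_1(x)+xp_2(x))$ with $p_2\not\equiv0$, (c) $e^{\mathrm{i}k_1x}p_1(x)+e^{\mathrm{i}k_2x}p_2(x)$ with $[k_1]_\gamma\ne[k_2]_\gamma$, where $k_j\in\mathbb{C}$ and $p,p_1,p_2\in C^2_{p,\gamma}(\mathbb{R})$; the exponents $k$ are called quasimomenta, and $\mathcal{A}(\lambda)$ is the set of congruence classes modulo $2\pi/\gamma$ of quasimomenta of solutions for $\lambda$. $\sigma_{g}^{1}(\mathscr{L})$, $\sigma_{g}^{2}(\mathscr{L})$, $\sigma_{g}^{3}(\mathscr{L})$ are the sets of $\lambda\in\mathbb{R}$ for which there is a solution of form (a) with $|\mathcal{A}(\lambda)|=1$, of form (b) with $|\mathcal{A}(\lambda)|=1$, and of form (c) with $|\mathcal{A}(\lambda)|=2$, respectively. *)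

theory Defs
  imports "HOL-Analysis.Analysis"
begin

definition locfin :: "real set \<Rightarrow> bool" where
  "locfin D \<longleftrightarrow> (\<forall>a b. finite (D \<inter> {a..b}))"

definition periodic_fun :: "real \<Rightarrow> (real \<Rightarrow> 'a) \<Rightarrow> bool" where
  "periodic_fun \<gamma> f \<longleftrightarrow> (\<forall>x. f (x + \<gamma>) = f x)"

text \<open>The classes C_p^l(R): C_p^0 = piecewise continuous (finitely many discontinuities on
  each bounded interval), with |f| integrable on every bounded interval (improper integrals
  at discontinuities converge); C_p^(l+1) = continuous functions differentiable off a locally
  finite set, whose derivative lies in C_p^l.\<close>
fun Cp :: "nat \<Rightarrow> (real \<Rightarrow> complex) \<Rightarrow> bool" where
  "Cp 0 f \<longleftrightarrow> (\<exists>D. locfin D \<and> (\<forall>x. x \<notin> D \<longrightarrow> isCont f x)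
              \<and> (\<forall>a b. f absolutely_integrable_on {a..b}))"
| "Cp (Suc l) (f::real \<Rightarrow> complex) \<longleftrightarrow> continuous_on UNIV f \<and>
     (\<exists>(g::real \<Rightarrow> complex) D. locfin D \<and> Cp l g \<and> (\<forall>x::real. x \<notin> D \<longrightarrow> (f has_vector_derivative g x) (at x)))"

definition is_solution ::
  "(real \<Rightarrow> complex) \<Rightarrow> (real \<Rightarrow> complex) \<Rightarrow> real \<Rightarrow> (real \<Rightarrow> complex) \<Rightarrow> bool" where
  "is_solution V W lam \<psi> \<longleftrightarrow> Cp 2 \<psi> \<and>
     (\<exists>D. locfin D \<and> (\<forall>x. x \<notin> D \<longrightarrow>
        - vector_derivative (\<lambda>y. vector_derivative \<psi> (at y)) (at x)
          + W x * vector_derivative \<psi> (at x) + V x * \<psi> x = complex_of_real lam * \<psi> x))"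

definition qclass :: "real \<Rightarrow> complex \<Rightarrow> complex set" where
  "qclass \<gamma> k = {k + of_int m * 2 * of_real pi / of_real \<gamma> | m. True}"

definition Cp_per :: "real \<Rightarrow> (real \<Rightarrow> complex) \<Rightarrow> bool" where
  "Cp_per \<gamma> p \<longleftrightarrow> Cp 2 p \<and> periodic_fun \<gamma> p"

definition form_a :: "real \<Rightarrow> complex \<Rightarrow> (real \<Rightarrow> complex) \<Rightarrow> bool" where
  "form_a \<gamma> k \<psi> \<longleftrightarrow> (\<exists>p. Cp_per \<gamma> p \<and> p \<noteq> (\<lambda>_. 0) \<and>
      (\<forall>x. \<psi> x = exp (\<i> * k * of_real x) * p x))"

definition form_b :: "real \<Rightarrow> complex \<Rightarrow> (real \<Rightarrow> complex) \<Rightarrow> bool" where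
  "form_b \<gamma> k \<psi> \<longleftrightarrow> (\<exists>p1 p2. Cp_per \<gamma> p1 \<and> Cp_per \<gamma> p2 \<and> p2 \<noteq> (\<lambda>_. 0) \<and>
      (\<forall>x. \<psi> x = exp (\<i> * k * of_real x) * (p1 x + of_real x * p2 x)))"

definition form_c :: "real \<Rightarrow> complex \<Rightarrow> complex \<Rightarrow> (real \<Rightarrow> complex) \<Rightarrow> bool" where
  "form_c \<gamma> k1 k2 \<psi> \<longleftrightarrow> qclass \<gamma> k1 \<noteq> qclass \<gamma> k2 \<and>
     (\<exists>p1 p2. Cp_per \<gamma> p1 \<and> Cp_per \<gamma> p2 \<and> p1 \<noteq> (\<lambda>_. 0) \<and> p2 \<noteq> (\<lambda>_. 0) \<and>
      (\<forall>x. \<psi> x = exp (\<i> * k1 * of_real x) * p1 x + exp (\<i> * k2 * of_real x) * p2 x))"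

definition quasimomentum ::
  "real \<Rightarrow> (real \<Rightarrow> complex) \<Rightarrow> (real \<Rightarrow> complex) \<Rightarrow> real \<Rightarrow> complex \<Rightarrow> bool" where
  "quasimomentum \<gamma> V W lam k \<longleftrightarrow> (\<exists>\<psi>. is_solution V W lam \<psi> \<and>
      (form_a \<gamma> k \<psi> \<or> form_b \<gamma> k \<psi> \<or> (\<exists>k'. form_c \<gamma> k k' \<psi> \<or> form_c \<gamma> k' k \<psi>)))"

definition Acal :: "real \<Rightarrow> (real \<Rightarrow> complex) \<Rightarrow> (real \<Rightarrow> complex) \<Rightarrow> real \<Rightarrow> complex set set" where
  "Acal \<gamma> V W lam = {qclass \<gamma> k | k. quasimomentum \<gamma> V W lam k}"

definition sigma_g1 :: "real \<Rightarrow> (real \<Rightarrow> complex) \<Rightarrow> (real \<Rightarrow> complex) \<Rightarrow> real set" where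
  "sigma_g1 \<gamma> V W = {lam. (\<exists>\<psi> k. is_solution V W lam \<psi> \<and> form_a \<gamma> k \<psi>) \<and> card (Acal \<gamma> V W lam) = 1}"

definition sigma_g2 :: "real \<Rightarrow> (real \<Rightarrow> complex) \<Rightarrow> (real \<Rightarrow> complex) \<Rightarrow> real set" where
  "sigma_g2 \<gamma> V W = {lam. (\<exists>\<psi> k. is_solution V W lam \<psi> \<and> form_b \<gamma> k \<psi>) \<and> card (Acal \<gamma> V W lam) = 1}"

definition sigma_g3 :: "real \<Rightarrow> (real \<Rightarrow> complex) \<Rightarrow> (real \<Rightarrow> complex) \<Rightarrow> real set" where
  "sigma_g3 \<gamma> V W = {lam. (\<exists>\<psi> k1 k2. is_solution V W lam \<psi> \<and> form_c \<gamma> k1 k2 \<psi>) \<and> card (Acal \<gamma> V W lam) = 2}"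

end

theory Submission
  imports Defs
begin

lemma locfin_fin: "locfin D \<Longrightarrow> finite (D \<inter> {a..b})"
  by (simp add: locfin_def)

lemma locfin_Un: "locfin A \<Longrightarrow> locfin B \<Longrightarrow> locfin (A \<union> B)"
  by (simp add: locfin_def Int_Un_distrib2)

lemma locfin_empty: "locfin {}"
  by (simp add: locfin_def)

lemma locfin_subset: "locfin A \<Longrightarrow> B \<subseteq> A \<Longrightarrow> locfin B"
  unfolding locfin_def by (meson finite_subset inf_mono order_refl)

lemma locfin_shift: "locfin D \<Longrightarrow> locfin {x. x + c \<in> D}"
proof -
  assume D: "locfin D"
  show ?thesis unfolding locfin_def
  proof (intro allI)
    fix a b
    have "{x. x + c \<in> D} \<inter> {a..b} \<subseteq> (\<lambda>y. y - c) ` (D \<inter> {a+c..b+c})"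
      by (auto intro!: image_eqI[where x="_ + c"])
    moreover have "finite ((\<lambda>y. y - c) ` (D \<inter> {a+c..b+c}))"
      using D by (simp add: locfin_def)
    ultimately show "finite ({x. x + c \<in> D} \<inter> {a..b})" by (rule finite_subset)
  qed
qed

lemma locfin_avoid:
  assumes "locfin D" "x \<notin> D"
  shows "\<exists>e>0. \<forall>y. dist y x < e \<longrightarrow> y \<notin> D"
proof -
  have "finite (D \<inter> {x-1..x+1})" using assms by (simp add: locfin_def)
  then obtain d where d: "d > 0" "\<forall>y\<in>D \<inter> {x-1..x+1}. y \<noteq> x \<longrightarrow> d \<le> dist x y"
    using finite_set_avoid by blast
  show ?thesis
  proof (intro exI[of _ "min d 1"] conjI allI impI)
    show "0 < min d 1" using d by simp
    fix y assume y: "dist y x < min d 1"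
    show "y \<notin> D"
    proof
      assume "y \<in> D"
      moreover have "y \<in> {x-1..x+1}" using y by (auto simp: dist_real_def)
      moreover have "y \<noteq> x" using assms \<open>y \<in> D\<close> by auto
      ultimately have "d \<le> dist x y" using d by auto
      with y show False by (simp add: dist_commute)
    qed
  qed
qed

lemma deriv_fill:
  fixes f g :: "real \<Rightarrow> 'a::banach"
  assumes fc: "continuous_on {a..b} f" and gc: "continuous_on {a..b} g" and S: "finite S"
    and der: "\<And>x. x \<in> {a<..<b} - S \<Longrightarrow> (f has_vector_derivative g x) (at x)"
    and x: "x \<in> {a<..<b}"
  shows "(f has_vector_derivative g x) (at x)"
proof -
  have eq: "f y = f a + integral {a..y} g" if y: "y \<in> {a..b}" for y
  proof -
    have "(g has_integral (f y - f a)) {a..y}"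
    proof (rule fundamental_theorem_of_calculus_interior_strong[OF S])
      show "a \<le> y" using y by simp
      show "(f has_vector_derivative g t) (at t)" if "t \<in> {a<..<y} - S" for t
        using der that y by auto
      show "continuous_on {a..y} f" using fc y by (auto intro: continuous_on_subset)
    qed
    then show ?thesis by (simp add: integral_unique)
  qed
  have "((\<lambda>u. f a + integral {a..u} g) has_vector_derivative g x) (at x within {a..b})"
    using integral_has_vector_derivative[OF gc, of x] x
    by (auto intro!: derivative_eq_intros)
  then have "((\<lambda>u. f a + integral {a..u} g) has_vector_derivative g x) (at x within {a<..<b})"
    by (rule has_vector_derivative_within_subset) auto
  then have "((\<lambda>u. f a + integral {a..u} g) has_vector_derivative g x) (at x)"
    using x by (metis has_vector_derivative_within_open open_greaterThanLessThan)
  then show ?thesis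
  proof (rule has_vector_derivative_transform_within_open[where S="{a<..<b}"])
    show "open {a<..<b}" by simp
    show "x \<in> {a<..<b}" by (rule x)
    show "f a + integral {a..y} g = f y" if "y \<in> {a<..<b}" for y
      using eq[of y] that by simp
  qed
qed

lemma deriv_fill_global:
  fixes f g :: "real \<Rightarrow> 'a::banach"
  assumes fc: "continuous_on UNIV f" and gc: "continuous_on UNIV g" and D: "locfin D"
    and der: "\<And>x. x \<notin> D \<Longrightarrow> (f has_vector_derivative g x) (at x)"
  shows "(f has_vector_derivative g x) (at x)"
proof (rule deriv_fill[where a="x-1" and b="x+1" and S="D \<inter> {x-1..x+1}"])
  show "continuous_on {x - 1..x + 1} f" using fc by (rule continuous_on_subset) simp
  show "continuous_on {x - 1..x + 1} g" using gc by (rule continuous_on_subset) simp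
  show "finite (D \<inter> {x - 1..x + 1})" using D by (rule locfin_fin)
  show "(f has_vector_derivative g y) (at y)" if "y \<in> {x - 1<..<x + 1} - D \<inter> {x - 1..x + 1}" for y
    using that by (intro der) auto
  show "x \<in> {x - 1<..<x + 1}" by simp
qed

lemma absint_mult_cont:
  fixes f g :: "real \<Rightarrow> 'a::{euclidean_space,real_normed_algebra}"
  assumes f: "f absolutely_integrable_on {a..b}" and g: "continuous_on {a..b} g"
  shows "(\<lambda>x. g x * f x) absolutely_integrable_on {a..b}"
proof (rule absolutely_integrable_bounded_measurable_product[OF bilinear_times _ _ _ f])
  show "g \<in> borel_measurable (lebesgue_on {a..b})"
    using g by (rule continuous_imp_measurable_on_sets_lebesgue) simp
  show "{a..b} \<in> sets lebesgue" by simp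
  show "bounded (g ` {a..b})"
    using g by (simp add: compact_continuous_image compact_imp_bounded)
qed

lemma Cp0_cont:
  assumes "continuous_on UNIV f" shows "Cp 0 (f :: real \<Rightarrow> complex)"
proof -
  have "isCont f x" for x using assms by (simp add: continuous_on_eq_continuous_at)
  moreover have "f absolutely_integrable_on {a..b}" for a b
    by (rule absolutely_integrable_continuous_real) (rule continuous_on_subset[OF assms], simp)
  ultimately show ?thesis using locfin_empty by auto
qed

lemma Cp0_add:
  assumes "Cp 0 f" "Cp 0 g" shows "Cp 0 (\<lambda>x. f x + g x)"
proof -
  from assms obtain D1 D2 where D: "locfin D1" "locfin D2"
    "\<forall>x. x \<notin> D1 \<longrightarrow> isCont f x" "\<forall>x. x \<notin> D2 \<longrightarrow> isCont g x"
    "\<forall>a b. f absolutely_integrable_on {a..b}" "\<forall>a b. g absolutely_integrable_on {a..b}"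
    by auto
  have "(\<lambda>x. f x + g x) absolutely_integrable_on {a..b}" for a b
    by (rule set_integral_add(1)) (use D(5,6) in blast)+
  moreover have "isCont (\<lambda>x. f x + g x) x" if "x \<notin> D1 \<union> D2" for x
    using D(3,4) that by (intro continuous_intros) auto
  moreover have "locfin (D1 \<union> D2)" using D(1,2) by (rule locfin_Un)
  ultimately show ?thesis by (simp only: Cp.simps) blast
qed

lemma Cp0_mult:
  assumes gc0: "continuous_on UNIV g" and "Cp 0 f" shows "Cp 0 (\<lambda>x. g x * f x)"
proof -
  from assms obtain D where D: "locfin D"
    "\<forall>x. x \<notin> D \<longrightarrow> isCont f x" "\<forall>a b. f absolutely_integrable_on {a..b}"
    by auto
  have gc: "isCont g x" for x using assms(1) by (simp add: continuous_on_eq_continuous_at)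
  have "(\<lambda>x. g x * f x) absolutely_integrable_on {a..b}" for a b
    using D(3) by (intro absint_mult_cont continuous_on_subset[OF gc0]) auto
  moreover have "isCont (\<lambda>x. g x * f x) x" if "x \<notin> D" for x
    using D(2) gc that by (intro continuous_intros) auto
  ultimately show ?thesis using D(1) by (simp only: Cp.simps) blast
qed


lemma indef_deriv:
  fixes f :: "real \<Rightarrow> 'a::banach"
  assumes fi: "f integrable_on {a..b}" and S: "finite S" and y: "y \<in> {a<..<b} - S"
    and fc: "isCont f y"
  shows "((\<lambda>u. integral {a..u} f) has_vector_derivative f y) (at y)"
proof -
  have "((\<lambda>u. integral {a..u} f) has_vector_derivative f y) (at y within ({a..b} - S))"
    by (rule integral_has_vector_derivative_continuous_at[OF fi _ S])
       (use y fc in \<open>auto intro: continuous_at_imp_continuous_within\<close>)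
  then have "((\<lambda>u. integral {a..u} f) has_vector_derivative f y) (at y within ({a<..<b} - S))"
    by (rule has_vector_derivative_within_subset) auto
  moreover have "open ({a<..<b} - S)" using S by (simp add: open_Diff finite_imp_closed)
  ultimately show ?thesis using y by (metis has_vector_derivative_within_open)
qed

lemma gronwall0:
  fixes n m :: "real \<Rightarrow> real"
  assumes nc: "continuous_on {0..L} n" and nn: "\<And>x. x\<in>{0..L} \<Longrightarrow> 0 \<le> n x"
    and mi: "m integrable_on {0..L}" and mpos: "\<And>x. x\<in>{0..L} \<Longrightarrow> 0 \<le> m x"
    and S: "finite S" and mc: "\<And>x. x \<in> {0<..<L} - S \<Longrightarrow> isCont m x"
    and mni: "(\<lambda>s. m s * n s) integrable_on {0..L}"
    and le: "\<And>x. x\<in>{0..L} \<Longrightarrow> n x \<le> integral {0..x} (\<lambda>s. m s * n s)"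
    and x: "x \<in> {0..L}"
  shows "n x = 0"
proof -
  define M where "M y = integral {0..y} m" for y
  define F where "F y = integral {0..y} (\<lambda>s. m s * n s)" for y
  define H where "H y = exp (- M y) * F y" for y
  have Mc: "continuous_on {0..L} M" unfolding M_def by (rule indefinite_integral_continuous_1[OF mi])
  have Fc: "continuous_on {0..L} F" unfolding F_def by (rule indefinite_integral_continuous_1[OF mni])
  have Hc: "continuous_on {0..L} H" unfolding H_def by (intro continuous_intros Mc Fc)
  have derM: "(M has_real_derivative m y) (at y)" if y: "y \<in> {0<..<L} - S" for y
    unfolding M_def has_real_derivative_iff_has_vector_derivative
    by (rule indef_deriv[OF mi S y mc[OF y]])
  have derF: "(F has_real_derivative m y * n y) (at y)" if y: "y \<in> {0<..<L} - S" for y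
  proof -
    have "isCont n y" using y by (intro continuous_on_interior[OF nc]) auto
    then have "isCont (\<lambda>s. m s * n s) y" using mc[OF y] by (intro continuous_intros)
    then show ?thesis
      unfolding F_def has_real_derivative_iff_has_vector_derivative
      by (rule indef_deriv[OF mni S y])
  qed
  have derH: "(H has_vector_derivative (exp (- M y) * m y * (n y - F y))) (at y)"
    if y: "y \<in> {0<..<L} - S" for y
  proof -
    have "(H has_real_derivative (exp (- M y) * (- m y) * F y + exp (- M y) * (m y * n y))) (at y)"
      unfolding H_def
      by (rule derivative_eq_intros derM[OF y] derF[OF y] refl)+ (simp add: algebra_simps)
    then show ?thesis
      unfolding has_real_derivative_iff_has_vector_derivative by (simp add: algebra_simps)
  qed
  have "((\<lambda>y. exp (- M y) * m y * (n y - F y)) has_integral (H x - H 0)) {0..x}"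
  proof (rule fundamental_theorem_of_calculus_interior_strong[OF S])
    show "0 \<le> x" using x by simp
    show "(H has_vector_derivative exp (- M y) * m y * (n y - F y)) (at y)"
      if "y \<in> {0<..<x} - S" for y using that x by (intro derH) auto
    show "continuous_on {0..x} H" using x by (intro continuous_on_subset[OF Hc]) auto
  qed
  moreover have "((\<lambda>y. 0) has_integral 0) {0..x}" by simp
  moreover have "exp (- M y) * m y * (n y - F y) \<le> 0" if "y \<in> {0..x}" for y
  proof -
    have "y \<in> {0..L}" using that x by auto
    then have "n y - F y \<le> 0" "0 \<le> m y" using le mpos unfolding F_def by auto
    then show ?thesis by (simp add: mult_nonneg_nonpos)
  qed
  ultimately have "H x - H 0 \<le> 0" by (rule has_integral_le)
  moreover have "H 0 = 0" by (simp add: H_def F_def)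
  ultimately have "F x \<le> 0" by (simp add: H_def mult_le_0_iff)
  then show "n x = 0" using le[OF x] nn[OF x] unfolding F_def by linarith
qed


lemma shift_deriv:
  fixes f :: "real \<Rightarrow> 'a::real_normed_vector"
  assumes "(f has_vector_derivative f') (at (x + c))"
  shows "((\<lambda>y. f (y + c)) has_vector_derivative f') (at x)"
proof -
  have "((\<lambda>y. y + c) has_vector_derivative 1) (at x)"
    by (auto intro!: derivative_eq_intros)
  from vector_diff_chain_at[OF this assms] show ?thesis by (simp add: o_def)
qed

locale hill =
  fixes gam :: real and V W :: "real \<Rightarrow> complex" and lam :: real
  assumes gpos: "gam > 0" and Vcp: "Cp 0 V" and Vper: "periodic_fun gam V"
    and Wc: "continuous_on UNIV W" and Wper: "periodic_fun gam W"
begin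

definition DV where "DV = (SOME D. locfin D \<and> (\<forall>x. x \<notin> D \<longrightarrow> isCont V x))"

lemma DV: "locfin DV" "\<And>x. x \<notin> DV \<Longrightarrow> isCont V x"
proof -
  have "\<exists>D. locfin D \<and> (\<forall>x. x \<notin> D \<longrightarrow> isCont V x)" using Vcp by auto
  then have "locfin DV \<and> (\<forall>x. x \<notin> DV \<longrightarrow> isCont V x)"
    unfolding DV_def by (rule someI_ex)
  then show "locfin DV" "\<And>x. x \<notin> DV \<Longrightarrow> isCont V x" by auto
qed

lemma V_int: "V absolutely_integrable_on {a..b}"
  using Vcp by auto

lemma W_cont: "isCont W x"
  using Wc by (simp add: continuous_on_eq_continuous_at)

lemma Vl_Cp0: "Cp 0 (\<lambda>x. V x - of_real lam)"
proof -
  have "Cp 0 (\<lambda>x. V x + (- of_real lam))"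
    by (rule Cp0_add[OF Vcp Cp0_cont]) simp
  then show ?thesis by simp
qed

definition gsol :: "(real \<Rightarrow> complex) \<Rightarrow> (real \<Rightarrow> complex) \<Rightarrow> bool" where
  "gsol f g \<longleftrightarrow> (\<forall>x. (f has_vector_derivative g x) (at x)) \<and> continuous_on UNIV g \<and>
     (\<exists>E. locfin E \<and> (\<forall>x. x \<notin> E \<longrightarrow>
        (g has_vector_derivative (W x * g x + (V x - of_real lam) * f x)) (at x)))"

definition solI :: "real \<Rightarrow> (real \<Rightarrow> complex) \<Rightarrow> (real \<Rightarrow> complex) \<Rightarrow> bool" where
  "solI L u v \<longleftrightarrow> continuous_on {0..L} u \<and> continuous_on {0..L} v \<and>
     (\<exists>S. finite S \<and> (\<forall>x\<in>{0<..<L} - S. (u has_vector_derivative v x) (at x) \<and>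
        (v has_vector_derivative (W x * v x + (V x - of_real lam) * u x)) (at x)))"

lemma Cp2_unfold:
  "Cp 2 f \<longleftrightarrow> continuous_on UNIV f \<and>
     (\<exists>g D1. locfin D1 \<and> (continuous_on UNIV g \<and> (\<exists>h D2. locfin D2 \<and> Cp 0 h \<and>
        (\<forall>x. x \<notin> D2 \<longrightarrow> (g has_vector_derivative h x) (at x)))) \<and>
        (\<forall>x. x \<notin> D1 \<longrightarrow> (f has_vector_derivative g x) (at x)))"
  by (simp add: numeral_2_eq_2)

lemma sol_to_gsol:
  assumes "is_solution V W lam \<psi>"
  shows "\<exists>g. gsol \<psi> g"
proof -
  from assms obtain D where D: "locfin D" and ode: "\<And>x. x \<notin> D \<Longrightarrow>
        - vector_derivative (\<lambda>y. vector_derivative \<psi> (at y)) (at x)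
          + W x * vector_derivative \<psi> (at x) + V x * \<psi> x = complex_of_real lam * \<psi> x"
    and c2: "Cp 2 \<psi>"
    unfolding is_solution_def by blast
  from c2 obtain g D1 h D2 where pc: "continuous_on UNIV \<psi>" and D1: "locfin D1"
    and gc: "continuous_on UNIV g" and D2: "locfin D2"
    and dg: "\<And>x. x \<notin> D2 \<Longrightarrow> (g has_vector_derivative h x) (at x)"
    and dpsi0: "\<And>x. x \<notin> D1 \<Longrightarrow> (\<psi> has_vector_derivative g x) (at x)"
    unfolding Cp2_unfold by blast
  have dpsi: "(\<psi> has_vector_derivative g x) (at x)" for x
    by (rule deriv_fill_global[OF pc gc D1 dpsi0])
  have vd: "(\<lambda>y. vector_derivative \<psi> (at y)) = g"
    using dpsi vector_derivative_at by blast
  have "(g has_vector_derivative (W x * g x + (V x - of_real lam) * \<psi> x)) (at x)"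
    if x: "x \<notin> D \<union> D2" for x
  proof -
    have "vector_derivative g (at x) = h x" using dg x vector_derivative_at by blast
    moreover have "vector_derivative \<psi> (at x) = g x" using vd by metis
    ultimately have "h x = W x * g x + (V x - of_real lam) * \<psi> x"
      using ode[of x] x vd by (simp add: algebra_simps)
    then show ?thesis using dg[of x] x by (metis UnCI)
  qed
  then have "gsol \<psi> g"
    unfolding gsol_def using dpsi gc locfin_Un[OF D D2] by blast
  then show ?thesis by blast
qed

lemma gsol_cont: "gsol f g \<Longrightarrow> continuous_on UNIV f"
  unfolding gsol_def
  by (meson continuous_at_imp_continuous_on has_vector_derivative_continuous)

lemma gsol_to_sol:
  assumes "gsol f g"
  shows "is_solution V W lam f"
proof -
  from assms obtain E where df: "\<And>x. (f has_vector_derivative g x) (at x)"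
    and gc: "continuous_on UNIV g" and E: "locfin E"
    and dg: "\<And>x. x \<notin> E \<Longrightarrow> (g has_vector_derivative (W x * g x + (V x - of_real lam) * f x)) (at x)"
    unfolding gsol_def by blast
  have fc: "continuous_on UNIV f" using gsol_cont[OF assms] .
  define h where "h x = W x * g x + (V x - of_real lam) * f x" for x
  have "Cp 0 (\<lambda>x. W x * g x + f x * (V x - of_real lam))"
    by (intro Cp0_add Cp0_cont Cp0_mult Vl_Cp0 fc continuous_intros Wc gc)
  moreover have "(\<lambda>x. W x * g x + f x * (V x - of_real lam)) = h"
    by (auto simp: h_def algebra_simps)
  ultimately have h0: "Cp 0 h" by simp
  have "Cp 2 f"
    unfolding Cp2_unfold
    using fc gc h0 E df dg locfin_empty unfolding h_def by blast
  moreover have vd: "(\<lambda>y. vector_derivative f (at y)) = g"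
    using df vector_derivative_at by blast
  have "- vector_derivative (\<lambda>y. vector_derivative f (at y)) (at x)
          + W x * vector_derivative f (at x) + V x * f x = complex_of_real lam * f x"
    if "x \<notin> E" for x
  proof -
    have "vector_derivative g (at x) = h x" using dg that vector_derivative_at unfolding h_def by blast
    moreover have "vector_derivative f (at x) = g x" using vd by metis
    ultimately show ?thesis using vd by (simp add: h_def algebra_simps)
  qed
  ultimately show ?thesis unfolding is_solution_def using E by blast
qed

lemma gsol_lin:
  assumes "gsol f1 g1" "gsol f2 g2"
  shows "gsol (\<lambda>x. a * f1 x + b * f2 x) (\<lambda>x. a * g1 x + b * g2 x)"
proof -
  from assms obtain E1 E2 where df1: "\<And>x. (f1 has_vector_derivative g1 x) (at x)"
    and gc1: "continuous_on UNIV g1" and E1: "locfin E1"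
    and dg1: "\<And>x. x \<notin> E1 \<Longrightarrow> (g1 has_vector_derivative (W x * g1 x + (V x - of_real lam) * f1 x)) (at x)"
    and df2: "\<And>x. (f2 has_vector_derivative g2 x) (at x)"
    and gc2: "continuous_on UNIV g2" and E2: "locfin E2"
    and dg2: "\<And>x. x \<notin> E2 \<Longrightarrow> (g2 has_vector_derivative (W x * g2 x + (V x - of_real lam) * f2 x)) (at x)"
    unfolding gsol_def by blast
  have "((\<lambda>x. a * f1 x + b * f2 x) has_vector_derivative (a * g1 x + b * g2 x)) (at x)" for x
    using df1[of x] df2[of x] by (auto intro!: derivative_eq_intros)
  moreover have "continuous_on UNIV (\<lambda>x. a * g1 x + b * g2 x)"
    by (intro continuous_intros gc1 gc2)
  moreover have "((\<lambda>x. a * g1 x + b * g2 x) has_vector_derivative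
      (W x * (a * g1 x + b * g2 x) + (V x - of_real lam) * (a * f1 x + b * f2 x))) (at x)"
    if "x \<notin> E1 \<union> E2" for x
  proof -
    have "((\<lambda>x. a * g1 x + b * g2 x) has_vector_derivative
      (a * (W x * g1 x + (V x - of_real lam) * f1 x) + b * (W x * g2 x + (V x - of_real lam) * f2 x))) (at x)"
      using dg1[of x] dg2[of x] that by (auto intro!: derivative_eq_intros)
    then show ?thesis by (simp add: algebra_simps)
  qed
  ultimately show ?thesis unfolding gsol_def using locfin_Un[OF E1 E2] by blast
qed

lemma Vper': "V (x + gam) = V x" and Wper': "W (x + gam) = W x"
  using Vper Wper by (auto simp: periodic_fun_def)

lemma gsol_shift:
  assumes "gsol f g"
  shows "gsol (\<lambda>x. f (x + gam)) (\<lambda>x. g (x + gam))"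
proof -
  from assms obtain E where df: "\<And>x. (f has_vector_derivative g x) (at x)"
    and gc: "continuous_on UNIV g" and E: "locfin E"
    and dg: "\<And>x. x \<notin> E \<Longrightarrow> (g has_vector_derivative (W x * g x + (V x - of_real lam) * f x)) (at x)"
    unfolding gsol_def by blast
  have "((\<lambda>x. f (x + gam)) has_vector_derivative g (x + gam)) (at x)" for x
    by (rule shift_deriv[OF df])
  moreover have "continuous_on UNIV (\<lambda>x. g (x + gam))"
    by (intro continuous_on_compose2[OF gc] continuous_intros) auto
  moreover have "((\<lambda>x. g (x + gam)) has_vector_derivative
      (W x * g (x + gam) + (V x - of_real lam) * f (x + gam))) (at x)"
    if "x \<notin> {x. x + gam \<in> E}" for x
    using shift_deriv[OF dg[of "x + gam"]] that by (simp add: Vper' Wper')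
  ultimately show ?thesis unfolding gsol_def using locfin_shift[OF E] by blast
qed

lemma gsol_solI:
  assumes "gsol f g"
  shows "solI L f g"
proof -
  from assms obtain E where df: "\<And>x. (f has_vector_derivative g x) (at x)"
    and gc: "continuous_on UNIV g" and E: "locfin E"
    and dg: "\<And>x. x \<notin> E \<Longrightarrow> (g has_vector_derivative (W x * g x + (V x - of_real lam) * f x)) (at x)"
    unfolding gsol_def by blast
  have fc: "continuous_on UNIV f" using gsol_cont[OF assms] .
  show ?thesis unfolding solI_def
  proof (intro conjI exI[of _ "E \<inter> {0..L}"])
    show "continuous_on {0..L} f" by (rule continuous_on_subset[OF fc]) simp
    show "continuous_on {0..L} g" by (rule continuous_on_subset[OF gc]) simp
    show "finite (E \<inter> {0..L})" using E by (rule locfin_fin)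
    show "\<forall>x\<in>{0<..<L} - E \<inter> {0..L}. (f has_vector_derivative g x) (at x) \<and>
      (g has_vector_derivative W x * g x + (V x - complex_of_real lam) * f x) (at x)"
      using df dg by auto
  qed
qed

lemma solI_lin:
  assumes "solI L u1 v1" "solI L u2 v2"
  shows "solI L (\<lambda>x. a * u1 x + b * u2 x) (\<lambda>x. a * v1 x + b * v2 x)"
proof -
  from assms obtain S1 S2 where c: "continuous_on {0..L} u1" "continuous_on {0..L} v1"
     "continuous_on {0..L} u2" "continuous_on {0..L} v2" and S: "finite S1" "finite S2"
    and d1: "\<And>x. x\<in>{0<..<L} - S1 \<Longrightarrow> (u1 has_vector_derivative v1 x) (at x) \<and>
        (v1 has_vector_derivative (W x * v1 x + (V x - of_real lam) * u1 x)) (at x)"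
    and d2: "\<And>x. x\<in>{0<..<L} - S2 \<Longrightarrow> (u2 has_vector_derivative v2 x) (at x) \<and>
        (v2 has_vector_derivative (W x * v2 x + (V x - of_real lam) * u2 x)) (at x)"
    unfolding solI_def by metis
  show ?thesis unfolding solI_def
  proof (intro conjI exI[of _ "S1 \<union> S2"] ballI)
    show "continuous_on {0..L} (\<lambda>x. a * u1 x + b * u2 x)" by (intro continuous_intros c)
    show "continuous_on {0..L} (\<lambda>x. a * v1 x + b * v2 x)" by (intro continuous_intros c)
    show "finite (S1 \<union> S2)" using S by simp
    fix x assume x: "x \<in> {0<..<L} - (S1 \<union> S2)"
    show "((\<lambda>x. a * u1 x + b * u2 x) has_vector_derivative a * v1 x + b * v2 x) (at x)"
      using d1[of x] d2[of x] x by (auto intro!: derivative_eq_intros)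
    have "((\<lambda>x. a * v1 x + b * v2 x) has_vector_derivative
      (a * (W x * v1 x + (V x - of_real lam) * u1 x) + b * (W x * v2 x + (V x - of_real lam) * u2 x))) (at x)"
      using d1[of x] d2[of x] x by (auto intro!: derivative_eq_intros)
    then show "((\<lambda>x. a * v1 x + b * v2 x) has_vector_derivative
      W x * (a * v1 x + b * v2 x) + (V x - complex_of_real lam) * (a * u1 x + b * u2 x)) (at x)"
      by (simp add: algebra_simps)
  qed
qed

end


context hill
begin

definition mm :: "real \<Rightarrow> real" where
  "mm s = 1 + norm (W s) + norm (V s - of_real lam)"

lemma Vl_absint: "(\<lambda>s. V s - of_real lam) absolutely_integrable_on {a..b}"
  by (rule set_integral_diff(1)[OF V_int]) (rule absolutely_integrable_continuous_real, simp)

lemma nVl_absint: "(\<lambda>s. norm (V s - of_real lam)) absolutely_integrable_on {a..b}"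
  using absolutely_integrable_norm[OF Vl_absint] by (simp add: o_def)

lemma mm_absint: "mm absolutely_integrable_on {a..b}"
proof -
  have "(\<lambda>s. (1 + norm (W s)) + norm (V s - of_real lam)) absolutely_integrable_on {a..b}"
  proof (rule set_integral_add(1)[OF _ nVl_absint])
    show "(\<lambda>s. 1 + norm (W s)) absolutely_integrable_on {a..b}"
      by (rule absolutely_integrable_continuous_real)
         (intro continuous_intros continuous_on_subset[OF Wc], simp)
  qed
  then show ?thesis unfolding mm_def by simp
qed

lemma mm_int: "mm integrable_on {a..b}"
  using mm_absint by (rule absolutely_integrable_on_def[THEN iffD1, THEN conjunct1])

lemma mm_pos: "0 \<le> mm s"
  unfolding mm_def by simp

lemma mm_cont: "x \<notin> DV \<Longrightarrow> isCont mm x"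
  unfolding mm_def using DV(2) W_cont by (intro continuous_intros) auto

lemma mm_prod_int:
  assumes "continuous_on {a..b} n"
  shows "(\<lambda>s. mm s * n s) integrable_on {a..b}"
proof -
  have "(\<lambda>s. n s * mm s) absolutely_integrable_on {a..b}"
    by (rule absint_mult_cont[OF mm_absint assms])
  then have "(\<lambda>s. n s * mm s) integrable_on {a..b}"
    by (rule absolutely_integrable_on_def[THEN iffD1, THEN conjunct1])
  then show ?thesis by (simp add: mult.commute)
qed

lemma Vl_prod_absint:
  assumes "continuous_on {a..b} u"
  shows "(\<lambda>s. (V s - of_real lam) * u s) absolutely_integrable_on {a..b}"
proof -
  have "(\<lambda>s. u s * (V s - of_real lam)) absolutely_integrable_on {a..b}"
    by (rule absint_mult_cont[OF Vl_absint assms])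
  then show ?thesis by (simp add: mult.commute)
qed

lemma rhs_absint:
  assumes "continuous_on {a..b} u" "continuous_on {a..b} v"
  shows "(\<lambda>s. W s * v s + (V s - of_real lam) * u s) absolutely_integrable_on {a..b}"
proof (rule set_integral_add(1)[OF _ Vl_prod_absint[OF assms(1)]])
  show "(\<lambda>s. W s * v s) absolutely_integrable_on {a..b}"
    by (rule absolutely_integrable_continuous_real)
       (intro continuous_intros continuous_on_subset[OF Wc] assms, simp)
qed

lemma rhs_int:
  assumes "continuous_on {a..b} u" "continuous_on {a..b} v"
  shows "(\<lambda>s. W s * v s + (V s - of_real lam) * u s) integrable_on {a..b}"
  using rhs_absint[OF assms] by (rule absolutely_integrable_on_def[THEN iffD1, THEN conjunct1])

lemma solI_integral:
  assumes sol: "solI L u v" and x: "x \<in> {0..L}"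
  shows "(v has_integral (u x - u 0)) {0..x}"
    and "((\<lambda>s. W s * v s + (V s - of_real lam) * u s) has_integral (v x - v 0)) {0..x}"
proof -
  from sol obtain S where c: "continuous_on {0..L} u" "continuous_on {0..L} v" and S: "finite S"
    and d: "\<And>y. y\<in>{0<..<L} - S \<Longrightarrow> (u has_vector_derivative v y) (at y) \<and>
        (v has_vector_derivative (W y * v y + (V y - of_real lam) * u y)) (at y)"
    unfolding solI_def by metis
  show "(v has_integral (u x - u 0)) {0..x}"
  proof (rule fundamental_theorem_of_calculus_interior_strong[OF S])
    show "0 \<le> x" using x by simp
    show "(u has_vector_derivative v y) (at y)" if "y \<in> {0<..<x} - S" for y
      using d[of y] that x by auto
    show "continuous_on {0..x} u" using x by (intro continuous_on_subset[OF c(1)]) auto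
  qed
  show "((\<lambda>s. W s * v s + (V s - of_real lam) * u s) has_integral (v x - v 0)) {0..x}"
  proof (rule fundamental_theorem_of_calculus_interior_strong[OF S])
    show "0 \<le> x" using x by simp
    show "(v has_vector_derivative (W y * v y + (V y - of_real lam) * u y)) (at y)"
      if "y \<in> {0<..<x} - S" for y
      using d[of y] that x by auto
    show "continuous_on {0..x} v" using x by (intro continuous_on_subset[OF c(2)]) auto
  qed
qed

lemma solI_unique:
  assumes sol: "solI L u v" and u0: "u 0 = 0" and v0: "v 0 = 0" and x: "x \<in> {0..L}"
  shows "u x = 0 \<and> v x = 0"
proof -
  from sol have c: "continuous_on {0..L} u" "continuous_on {0..L} v"
    unfolding solI_def by auto
  define n where "n s = norm (u s) + norm (v s)" for s
  have nc: "continuous_on {0..L} n" unfolding n_def by (intro continuous_intros c)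
  have le: "n y \<le> integral {0..y} (\<lambda>s. mm s * n s)" if y: "y \<in> {0..L}" for y
  proof -
    have cy: "continuous_on {0..y} u" "continuous_on {0..y} v"
      using y by (auto intro: continuous_on_subset[OF c(1)] continuous_on_subset[OF c(2)])
    note I = solI_integral[OF sol y]
    define g1 where "g1 s = norm (v s)" for s
    define g2 where "g2 s = norm (W s) * norm (v s) + norm (V s - of_real lam) * norm (u s)" for s
    have g1i: "g1 integrable_on {0..y}" unfolding g1_def
      by (intro integrable_continuous_real continuous_intros cy)
    have g2i: "g2 integrable_on {0..y}"
    proof -
      have "(\<lambda>s. norm (u s) * norm (V s - of_real lam)) absolutely_integrable_on {0..y}"
        by (rule absint_mult_cont[OF nVl_absint]) (intro continuous_intros cy)
      then have "(\<lambda>s. norm (V s - of_real lam) * norm (u s)) integrable_on {0..y}"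
        by (simp add: absolutely_integrable_on_def mult.commute)
      moreover have "(\<lambda>s. norm (W s) * norm (v s)) integrable_on {0..y}"
        by (intro integrable_continuous_real continuous_intros cy continuous_on_subset[OF Wc]) simp
      ultimately show ?thesis unfolding g2_def by (rule Henstock_Kurzweil_Integration.integrable_add[rotated])
    qed
    have mni: "(\<lambda>s. mm s * n s) integrable_on {0..y}"
      by (rule mm_prod_int) (unfold n_def, intro continuous_intros cy)
    have "norm (u y) \<le> integral {0..y} g1"
    proof -
      have "norm (integral {0..y} v) \<le> integral {0..y} g1"
        by (rule integral_norm_bound_integral) (use I(1) g1i in \<open>auto simp: g1_def\<close>)
      then show ?thesis using I(1) u0 by (simp add: integral_unique)
    qed
    moreover have "norm (v y) \<le> integral {0..y} g2"
    proof -
      have "norm (integral {0..y} (\<lambda>s. W s * v s + (V s - of_real lam) * u s)) \<le> integral {0..y} g2"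
      proof (rule integral_norm_bound_integral)
        show "(\<lambda>s. W s * v s + (V s - of_real lam) * u s) integrable_on {0..y}"
          using I(2) by blast
        show "g2 integrable_on {0..y}" by (rule g2i)
        show "norm (W s * v s + (V s - of_real lam) * u s) \<le> g2 s" for s
          unfolding g2_def by (metis norm_mult norm_triangle_ineq)
      qed
      then show ?thesis using I(2) v0 by (simp add: integral_unique)
    qed
    moreover have "integral {0..y} g1 + integral {0..y} g2 \<le> integral {0..y} (\<lambda>s. mm s * n s)"
    proof -
      have "integral {0..y} g1 + integral {0..y} g2 = integral {0..y} (\<lambda>s. g1 s + g2 s)"
        by (rule integral_add[symmetric, OF g1i g2i])
      also have "\<dots> \<le> integral {0..y} (\<lambda>s. mm s * n s)"
      proof (rule integral_le)
        show "(\<lambda>s. g1 s + g2 s) integrable_on {0..y}"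
          by (rule Henstock_Kurzweil_Integration.integrable_add[OF g1i g2i])
        show "(\<lambda>s. mm s * n s) integrable_on {0..y}" by (rule mni)
        show "g1 s + g2 s \<le> mm s * n s" for s
        proof -
          have "mm s * n s = (norm (v s) + norm (W s) * norm (v s) + norm (V s - of_real lam) * norm (u s))
             + (norm (u s) + norm (W s) * norm (u s) + norm (V s - of_real lam) * norm (v s))"
            unfolding mm_def n_def by (simp add: algebra_simps)
          moreover have "0 \<le> norm (u s) + norm (W s) * norm (u s) + norm (V s - of_real lam) * norm (v s)"
            by simp
          ultimately show ?thesis unfolding g1_def g2_def by linarith
        qed
      qed
      finally show ?thesis .
    qed
    ultimately show ?thesis unfolding n_def by linarith
  qed
  have "n x = 0"
  proof (rule gronwall0[OF nc _ mm_int _ _ _ mm_prod_int[OF nc] le x])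
    show "0 \<le> n y" for y unfolding n_def by simp
    show "0 \<le> mm y" for y by (rule mm_pos)
    show "finite (DV \<inter> {0..L})" using DV(1) by (rule locfin_fin)
    show "isCont mm y" if "y \<in> {0<..<L} - DV \<inter> {0..L}" for y
      using that by (intro mm_cont) auto
  qed
  then show ?thesis unfolding n_def
    by (metis add_nonneg_eq_0_iff norm_eq_zero norm_ge_zero)
qed

lemma exp_deriv_vec:
  assumes "(f has_vector_derivative f') (at y)"
  shows "((\<lambda>y. exp (f y :: complex)) has_vector_derivative (f' * exp (f y))) (at y)"
  using field_vector_diff_chain_at[OF assms DERIV_exp] by (simp add: o_def)

lemma liouville:
  assumes s1: "solI L u1 v1" and s2: "solI L u2 v2" and L: "0 \<le> L"
  shows "u1 L * v2 L - v1 L * u2 L = (u1 0 * v2 0 - v1 0 * u2 0) * exp (integral {0..L} W)"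
proof -
  from s1 obtain S1 where c1: "continuous_on {0..L} u1" "continuous_on {0..L} v1" and S1: "finite S1"
    and d1: "\<And>y. y\<in>{0<..<L} - S1 \<Longrightarrow> (u1 has_vector_derivative v1 y) (at y) \<and>
        (v1 has_vector_derivative (W y * v1 y + (V y - of_real lam) * u1 y)) (at y)"
    unfolding solI_def by metis
  from s2 obtain S2 where c2: "continuous_on {0..L} u2" "continuous_on {0..L} v2" and S2: "finite S2"
    and d2: "\<And>y. y\<in>{0<..<L} - S2 \<Longrightarrow> (u2 has_vector_derivative v2 y) (at y) \<and>
        (v2 has_vector_derivative (W y * v2 y + (V y - of_real lam) * u2 y)) (at y)"
    unfolding solI_def by metis
  define I where "I y = integral {0..y} W" for y
  define w where "w y = u1 y * v2 y - v1 y * u2 y" for y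
  define H where "H y = exp (- I y) * w y" for y
  have Wi: "W integrable_on {0..L}"
    by (intro integrable_continuous_real continuous_on_subset[OF Wc]) simp
  have Ic: "continuous_on {0..L} I" unfolding I_def by (rule indefinite_integral_continuous_1[OF Wi])
  have Hc: "continuous_on {0..L} H" unfolding H_def w_def
    by (intro continuous_intros Ic c1 c2)
  have dH: "(H has_vector_derivative 0) (at y)" if y: "y \<in> {0<..<L} - (S1 \<union> S2)" for y
  proof -
    have dI: "(I has_vector_derivative W y) (at y)"
      unfolding I_def by (rule indef_deriv[OF Wi, of "{}"]) (use y W_cont in auto)
    have dE: "((\<lambda>y. exp (- I y)) has_vector_derivative (- W y * exp (- I y))) (at y)"
      by (rule exp_deriv_vec) (intro derivative_intros dI)
    have dw: "(w has_vector_derivative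
        (u1 y * (W y * v2 y + (V y - of_real lam) * u2 y) + v1 y * v2 y
         - (v1 y * v2 y + (W y * v1 y + (V y - of_real lam) * u1 y) * u2 y))) (at y)"
      unfolding w_def using d1[of y] d2[of y] y
      by (auto intro!: derivative_eq_intros)
    have "(H has_vector_derivative (exp (- I y) * (u1 y * (W y * v2 y + (V y - of_real lam) * u2 y) + v1 y * v2 y
         - (v1 y * v2 y + (W y * v1 y + (V y - of_real lam) * u1 y) * u2 y)) + (- W y * exp (- I y)) * w y)) (at y)"
      unfolding H_def by (rule has_vector_derivative_mult[OF dE dw])
    moreover have "exp (- I y) * (u1 y * (W y * v2 y + (V y - of_real lam) * u2 y) + v1 y * v2 y
         - (v1 y * v2 y + (W y * v1 y + (V y - of_real lam) * u1 y) * u2 y)) + (- W y * exp (- I y)) * w y = 0"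
      unfolding w_def by (simp add: algebra_simps)
    ultimately show ?thesis by simp
  qed
  have "((\<lambda>y. 0) has_integral (H L - H 0)) {0..L}"
    by (rule fundamental_theorem_of_calculus_interior_strong[of "S1 \<union> S2"])
       (use S1 S2 L dH Hc in auto)
  then have "H L = H 0" using has_integral_unique[OF _ has_integral_0] by fastforce
  moreover have "I 0 = 0" by (simp add: I_def)
  ultimately have "exp (- I L) * w L = w 0" by (simp add: H_def)
  then have "w L = w 0 * exp (I L)"
    by (metis exp_minus_inverse mult.commute mult.left_commute mult_1)
  then show ?thesis by (simp add: w_def I_def)
qed

end


context hill
begin

definition MM where "MM x = integral {0..x} mm"

lemma MM_deriv:
  assumes "y \<notin> DV" "0 < y"
  shows "(MM has_real_derivative mm y) (at y)"
  unfolding MM_def has_real_derivative_iff_has_vector_derivative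
  by (rule indef_deriv[OF mm_int[of 0 "y+1"], of "{}"]) (use assms mm_cont in auto)

lemma MM_cont: "continuous_on {0..L} MM"
  unfolding MM_def by (rule indefinite_integral_continuous_1[OF mm_int])

lemma MM_nonneg: "0 \<le> MM x"
  unfolding MM_def by (rule integral_nonneg[OF mm_int mm_pos])

lemma MM_mono: "0 \<le> x \<Longrightarrow> x \<le> L \<Longrightarrow> MM x \<le> MM L"
  unfolding MM_def by (rule integral_subset_le) (auto intro: mm_int mm_pos)

lemma MM_pow_integral:
  assumes x: "0 \<le> x"
  shows "((\<lambda>s. mm s * (MM s ^ n / fact n)) has_integral (MM x ^ Suc n / fact (Suc n))) {0..x}"
proof -
  have "((\<lambda>s. mm s * (MM s ^ n / fact n)) has_integral
          (MM x ^ Suc n / fact (Suc n) - MM 0 ^ Suc n / fact (Suc n))) {0..x}"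
  proof (rule fundamental_theorem_of_calculus_interior_strong[of "DV \<inter> {0..x}"])
    show "finite (DV \<inter> {0..x})" using DV(1) by (rule locfin_fin)
    show "0 \<le> x" by (rule x)
    show "((\<lambda>s. MM s ^ Suc n / fact (Suc n)) has_vector_derivative mm s * (MM s ^ n / fact n)) (at s)"
      if s: "s \<in> {0<..<x} - DV \<inter> {0..x}" for s
    proof -
      have sD: "s \<notin> DV" "0 < s" using s by auto
      have d1: "((\<lambda>s. MM s ^ Suc n) has_real_derivative of_nat (Suc n) * (mm s * MM s ^ n)) (at s)"
        using DERIV_power[OF MM_deriv[OF sD], of "Suc n"] by simp
      have "((\<lambda>s. MM s ^ Suc n / fact (Suc n)) has_real_derivative
              (of_nat (Suc n) * (mm s * MM s ^ n)) / fact (Suc n)) (at s)"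
        by (rule DERIV_cdivide[OF d1])
      moreover have "(of_nat (Suc n) * (mm s * MM s ^ n)) / fact (Suc n) = mm s * (MM s ^ n / fact n)"
      proof -
        have fs: "(fact (Suc n)::real) = of_nat (Suc n) * fact n" by (rule fact_Suc)
        have "(of_nat (Suc n) * (mm s * MM s ^ n)) / fact (Suc n) = (mm s * MM s ^ n) / fact n"
          unfolding fs by (rule nonzero_mult_divide_mult_cancel_left) simp
        then show ?thesis by simp
      qed
      ultimately show ?thesis by (simp add: has_real_derivative_iff_has_vector_derivative)
    qed
    show "continuous_on {0..x} (\<lambda>s. MM s ^ Suc n / fact (Suc n))"
      by (auto intro!: continuous_intros MM_cont)
  qed
  then show ?thesis by (simp add: MM_def)
qed

lemma step_est:
  assumes cy: "continuous_on {0..y} u" "continuous_on {0..y} v"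
  shows "norm (integral {0..y} v) + norm (integral {0..y} (\<lambda>s. W s * v s + (V s - of_real lam) * u s))
     \<le> integral {0..y} (\<lambda>s. mm s * (norm (u s) + norm (v s)))"
proof -
  define g1 where "g1 s = norm (v s)" for s
  define g2 where "g2 s = norm (W s) * norm (v s) + norm (V s - of_real lam) * norm (u s)" for s
  have g1i: "g1 integrable_on {0..y}" unfolding g1_def
    by (intro integrable_continuous_real continuous_intros cy)
  have g2i: "g2 integrable_on {0..y}"
  proof -
    have "(\<lambda>s. norm (u s) * norm (V s - of_real lam)) absolutely_integrable_on {0..y}"
      by (rule absint_mult_cont[OF nVl_absint]) (intro continuous_intros cy)
    then have "(\<lambda>s. norm (V s - of_real lam) * norm (u s)) integrable_on {0..y}"
      by (simp add: absolutely_integrable_on_def mult.commute)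
    moreover have "(\<lambda>s. norm (W s) * norm (v s)) integrable_on {0..y}"
      by (intro integrable_continuous_real continuous_intros cy continuous_on_subset[OF Wc]) simp
    ultimately show ?thesis unfolding g2_def by (rule Henstock_Kurzweil_Integration.integrable_add[rotated])
  qed
  have mni: "(\<lambda>s. mm s * (norm (u s) + norm (v s))) integrable_on {0..y}"
    by (rule mm_prod_int) (intro continuous_intros cy)
  have "norm (integral {0..y} v) \<le> integral {0..y} g1"
    by (rule integral_norm_bound_integral)
       (use g1i in \<open>auto simp: g1_def intro: integrable_continuous_real cy\<close>)
  moreover have "norm (integral {0..y} (\<lambda>s. W s * v s + (V s - of_real lam) * u s)) \<le> integral {0..y} g2"
  proof (rule integral_norm_bound_integral)
    show "(\<lambda>s. W s * v s + (V s - of_real lam) * u s) integrable_on {0..y}"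
      by (rule rhs_int[OF cy])
    show "g2 integrable_on {0..y}" by (rule g2i)
    show "norm (W s * v s + (V s - of_real lam) * u s) \<le> g2 s" for s
      unfolding g2_def by (metis norm_mult norm_triangle_ineq)
  qed
  moreover have "integral {0..y} g1 + integral {0..y} g2 \<le> integral {0..y} (\<lambda>s. mm s * (norm (u s) + norm (v s)))"
  proof -
    have "integral {0..y} g1 + integral {0..y} g2 = integral {0..y} (\<lambda>s. g1 s + g2 s)"
      by (rule integral_add[symmetric, OF g1i g2i])
    also have "\<dots> \<le> integral {0..y} (\<lambda>s. mm s * (norm (u s) + norm (v s)))"
    proof (rule integral_le)
      show "(\<lambda>s. g1 s + g2 s) integrable_on {0..y}"
        by (rule Henstock_Kurzweil_Integration.integrable_add[OF g1i g2i])
      show "(\<lambda>s. mm s * (norm (u s) + norm (v s))) integrable_on {0..y}" by (rule mni)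
      show "g1 s + g2 s \<le> mm s * (norm (u s) + norm (v s))" for s
      proof -
        have "mm s * (norm (u s) + norm (v s)) = (norm (v s) + norm (W s) * norm (v s) + norm (V s - of_real lam) * norm (u s))
           + (norm (u s) + norm (W s) * norm (u s) + norm (V s - of_real lam) * norm (v s))"
          unfolding mm_def by (simp add: algebra_simps)
        moreover have "0 \<le> norm (u s) + norm (W s) * norm (u s) + norm (V s - of_real lam) * norm (v s)"
          by simp
        ultimately show ?thesis unfolding g1_def g2_def by linarith
      qed
    qed
    finally show ?thesis .
  qed
  ultimately show ?thesis by linarith
qed

primrec pic :: "complex \<Rightarrow> complex \<Rightarrow> nat \<Rightarrow> (real \<Rightarrow> complex) \<times> (real \<Rightarrow> complex)" where
  "pic a b 0 = ((\<lambda>_. a), (\<lambda>_. b))"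
| "pic a b (Suc n) = ((\<lambda>x. integral {0..x} (snd (pic a b n))),
     (\<lambda>x. integral {0..x} (\<lambda>s. W s * snd (pic a b n) s + (V s - of_real lam) * fst (pic a b n) s)))"

lemma pic_props:
  assumes L: "0 \<le> L"
  shows "continuous_on {0..L} (fst (pic a b n)) \<and> continuous_on {0..L} (snd (pic a b n)) \<and>
    (\<forall>x\<in>{0..L}. norm (fst (pic a b n) x) + norm (snd (pic a b n) x) \<le> (norm a + norm b) * (MM x ^ n / fact n))"
proof (induction n)
  case 0
  show ?case
    by (simp only: pic.simps fst_conv snd_conv power_0 fact_0 div_by_1 mult_1_right
        continuous_on_const order_refl simp_thms) blast
next
  case (Suc n)
  define P where "P = fst (pic a b n)"
  define Q where "Q = snd (pic a b n)"
  have cP: "continuous_on {0..L} P" and cQ: "continuous_on {0..L} Q"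
    and bd: "\<And>x. x\<in>{0..L} \<Longrightarrow> norm (P x) + norm (Q x) \<le> (norm a + norm b) * (MM x ^ n / fact n)"
    using Suc unfolding P_def Q_def by blast+
  have c1: "continuous_on {0..L} (fst (pic a b (Suc n)))"
    unfolding pic.simps fst_conv P_def[symmetric] Q_def[symmetric]
    by (rule indefinite_integral_continuous_1[OF integrable_continuous_real[OF cQ]])
  have c2: "continuous_on {0..L} (snd (pic a b (Suc n)))"
    unfolding pic.simps snd_conv P_def[symmetric] Q_def[symmetric]
    by (rule indefinite_integral_continuous_1[OF rhs_int[OF cP cQ]])
  have b: "norm (fst (pic a b (Suc n)) x) + norm (snd (pic a b (Suc n)) x)
      \<le> (norm a + norm b) * (MM x ^ Suc n / fact (Suc n))" if x: "x \<in> {0..L}" for x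
  proof -
    have cx: "continuous_on {0..x} P" "continuous_on {0..x} Q"
      using x by (auto intro: continuous_on_subset[OF cP] continuous_on_subset[OF cQ])
    have "norm (fst (pic a b (Suc n)) x) + norm (snd (pic a b (Suc n)) x)
       \<le> integral {0..x} (\<lambda>s. mm s * (norm (P s) + norm (Q s)))"
      unfolding pic.simps fst_conv snd_conv P_def[symmetric] Q_def[symmetric]
      by (rule step_est[OF cx])
    also have "\<dots> \<le> integral {0..x} (\<lambda>s. mm s * ((norm a + norm b) * (MM s ^ n / fact n)))"
    proof (rule integral_le)
      show "(\<lambda>s. mm s * (norm (P s) + norm (Q s))) integrable_on {0..x}"
        by (rule mm_prod_int) (intro continuous_intros cx)
      show "(\<lambda>s. mm s * ((norm a + norm b) * (MM s ^ n / fact n))) integrable_on {0..x}"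
        by (rule mm_prod_int) (auto intro!: continuous_intros MM_cont)
      show "mm s * (norm (P s) + norm (Q s)) \<le> mm s * ((norm a + norm b) * (MM s ^ n / fact n))"
        if "s \<in> {0..x}" for s
      proof (rule mult_left_mono)
        show "0 \<le> mm s" by (rule mm_pos)
        show "norm (P s) + norm (Q s) \<le> (norm a + norm b) * (MM s ^ n / fact n)"
          using that x by (intro bd) auto
      qed
    qed
    also have "\<dots> = (norm a + norm b) * (MM x ^ Suc n / fact (Suc n))"
    proof -
      have x0: "0 \<le> x" using x by simp
      have hi: "((\<lambda>s. (norm a + norm b) * (mm s * (MM s ^ n / fact n))) has_integral
          (norm a + norm b) * (MM x ^ Suc n / fact (Suc n))) {0..x}"
        by (rule has_integral_mult_right[OF MM_pow_integral[OF x0]])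
      have eq: "(\<lambda>s. mm s * ((norm a + norm b) * (MM s ^ n / fact n))) =
          (\<lambda>s. (norm a + norm b) * (mm s * (MM s ^ n / fact n)))"
        by (rule ext) (rule mult.left_commute)
      show ?thesis unfolding eq by (rule integral_unique[OF hi])
    qed
    finally show ?thesis .
  qed
  show ?case using c1 c2 b by blast
qed

end


context hill
begin

lemma exist_solI:
  assumes L: "0 \<le> L"
  shows "\<exists>u v. solI L u v \<and> u 0 = a \<and> v 0 = b"
proof -
  define P where "P n = fst (pic a b n)" for n
  define Q where "Q n = snd (pic a b n)" for n
  define B where "B = norm a + norm b"
  define K where "K n = B * (MM L ^ n / fact n)" for n
  have B0: "0 \<le> B" unfolding B_def by simp
  have K0: "0 \<le> K n" for n unfolding K_def using B0 MM_nonneg[of L] by simp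
  have Ksum: "summable K"
  proof -
    have "summable (\<lambda>n. MM L ^ n /\<^sub>R fact n)" by (rule summable_exp_generic)
    then have "summable (\<lambda>n. B * (MM L ^ n /\<^sub>R fact n))" by (rule summable_mult)
    then show ?thesis unfolding K_def by (simp add: divide_inverse_commute)
  qed
  define Kt where "Kt = suminf K"
  have cP: "continuous_on {0..L} (P n)" and cQ: "continuous_on {0..L} (Q n)" for n
    using pic_props[OF L, of a b n] unfolding P_def Q_def by blast+
  have bnd: "norm (P n x) + norm (Q n x) \<le> K n" if x: "x \<in> {0..L}" for n x
  proof -
    have "norm (P n x) + norm (Q n x) \<le> B * (MM x ^ n / fact n)"
      using pic_props[OF L, of a b n] x unfolding P_def Q_def B_def by blast
    also have "\<dots> \<le> K n" unfolding K_def
      using x MM_nonneg[of x] MM_mono[of x L] B0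
      by (intro mult_left_mono divide_right_mono power_mono) auto
    finally show ?thesis .
  qed
  have bP: "norm (P n x) \<le> K n" and bQ: "norm (Q n x) \<le> K n" if "x \<in> {0..L}" for n x
    using bnd[OF that, of n] by (smt (verit) norm_ge_zero)+
  define Ps where "Ps x = (\<Sum>n. P n x)" for x
  define Qs where "Qs x = (\<Sum>n. Q n x)" for x
  define SP where "SP N x = (\<Sum>i<N. P i x)" for N x
  define SQ where "SQ N x = (\<Sum>i<N. Q i x)" for N x
  have sP: "summable (\<lambda>n. P n x)" and sQ: "summable (\<lambda>n. Q n x)" if "x \<in> {0..L}" for x
     by (rule summable_comparison_test'[OF Ksum], use bP[OF that] bQ[OF that] in blast)+
  have SPlim: "(\<lambda>N. SP N x) \<longlonglongrightarrow> Ps x" and SQlim: "(\<lambda>N. SQ N x) \<longlonglongrightarrow> Qs x"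
    if "x \<in> {0..L}" for x
    unfolding SP_def SQ_def Ps_def Qs_def using summable_LIMSEQ sP[OF that] sQ[OF that] by blast+
  have sumK: "(\<Sum>i<N. K i) \<le> Kt" for N
    unfolding Kt_def by (rule sum_le_suminf[OF Ksum]) (use K0 in auto)
  have SPb: "norm (SP N x) \<le> Kt" and SQb: "norm (SQ N x) \<le> Kt" if "x \<in> {0..L}" for N x
  proof -
    have "norm (SP N x) \<le> (\<Sum>i<N. norm (P i x))" unfolding SP_def by (rule norm_sum)
    also have "\<dots> \<le> (\<Sum>i<N. K i)" by (intro sum_mono bP that)
    finally show "norm (SP N x) \<le> Kt" using sumK[of N] by linarith
    have "norm (SQ N x) \<le> (\<Sum>i<N. norm (Q i x))" unfolding SQ_def by (rule norm_sum)
    also have "\<dots> \<le> (\<Sum>i<N. K i)" by (intro sum_mono bQ that)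
    finally show "norm (SQ N x) \<le> Kt" using sumK[of N] by linarith
  qed
  have cSP: "continuous_on {0..L} (SP N)" and cSQ: "continuous_on {0..L} (SQ N)" for N
    unfolding SP_def SQ_def by (intro continuous_intros cP cQ)+
  have P0: "P 0 x = a" and Q0: "Q 0 x = b" for x unfolding P_def Q_def by simp_all
  have PS: "P (Suc n) x = integral {0..x} (Q n)" for n x unfolding P_def Q_def by simp
  have QS: "Q (Suc n) x = integral {0..x} (\<lambda>s. W s * Q n s + (V s - of_real lam) * P n s)" for n x
    unfolding P_def Q_def by simp
  
  have eqs: "Qs integrable_on {0..x} \<and> Ps x = a + integral {0..x} Qs \<and>
      (\<lambda>s. W s * Qs s + (V s - of_real lam) * Ps s) integrable_on {0..x} \<and>
      Qs x = b + integral {0..x} (\<lambda>s. W s * Qs s + (V s - of_real lam) * Ps s)"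
    if x: "x \<in> {0..L}" for x
  proof -
    have sub: "{0..x} \<subseteq> {0..L}" using x by auto
    have cPx: "continuous_on {0..x} (P n)" and cQx: "continuous_on {0..x} (Q n)" for n
      using sub by (auto intro: continuous_on_subset[OF cP] continuous_on_subset[OF cQ])
    have cSPx: "continuous_on {0..x} (SP N)" and cSQx: "continuous_on {0..x} (SQ N)" for N
      using sub by (auto intro: continuous_on_subset[OF cSP] continuous_on_subset[OF cSQ])
    
    have f1: "SQ N integrable_on {0..x}" for N by (rule integrable_continuous_real[OF cSQx])
    have h1: "(\<lambda>_. Kt) integrable_on {0..x}" by (rule integrable_continuous_real[OF continuous_on_const])
    have le1: "norm (SQ N s) \<le> Kt" if "s \<in> {0..x}" for N s using that sub by (intro SQb) auto
    have cv1: "(\<lambda>N. SQ N s) \<longlonglongrightarrow> Qs s" if "s \<in> {0..x}" for s using that sub by (intro SQlim) auto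
    note dc1 = dominated_convergence[OF f1 h1 le1 cv1]
    have "integral {0..x} (SQ N) = (\<Sum>i<N. P (Suc i) x)" for N
      unfolding SQ_def PS
      by (rule integral_sum) (auto intro: integrable_continuous_real[OF cQx])
    with dc1(2) have l1: "(\<lambda>N. \<Sum>i<N. P (Suc i) x) \<longlonglongrightarrow> integral {0..x} Qs" by simp
    have "(\<lambda>i. P (Suc i) x) sums (Ps x - P 0 x)"
    proof -
      have "(\<lambda>i. P i x) sums Ps x" unfolding Ps_def using sP[OF x] by (rule summable_sums)
      then show ?thesis by (subst sums_Suc_iff) simp
    qed
    then have l2: "(\<lambda>N. \<Sum>i<N. P (Suc i) x) \<longlonglongrightarrow> Ps x - a" unfolding sums_def P0 .
    have e1: "Ps x = a + integral {0..x} Qs" using LIMSEQ_unique[OF l1 l2] by simp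
    
    define R where "R N s = W s * SQ N s + (V s - of_real lam) * SP N s" for N s
    have f2: "R N integrable_on {0..x}" for N unfolding R_def by (rule rhs_int[OF cSPx cSQx])
    have h2: "(\<lambda>s. mm s * Kt) integrable_on {0..x}" by (rule integrable_on_mult_left[OF mm_int])
    have le2: "norm (R N s) \<le> mm s * Kt" if "s \<in> {0..x}" for N s
    proof -
      have s: "s \<in> {0..L}" using that sub by auto
      have "norm (R N s) \<le> norm (W s) * norm (SQ N s) + norm (V s - of_real lam) * norm (SP N s)"
        unfolding R_def by (metis norm_mult norm_triangle_ineq)
      also have "\<dots> \<le> norm (W s) * Kt + norm (V s - of_real lam) * Kt"
        by (intro add_mono mult_left_mono SQb SPb s) auto
      also have "\<dots> \<le> mm s * Kt"
      proof -
        have "0 \<le> Kt" using sumK[of 0] by simp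
        then show ?thesis unfolding mm_def by (simp add: algebra_simps)
      qed
      finally show ?thesis .
    qed
    have cv2: "(\<lambda>N. R N s) \<longlonglongrightarrow> W s * Qs s + (V s - of_real lam) * Ps s" if "s \<in> {0..x}" for s
    proof -
      have s: "s \<in> {0..L}" using that sub by auto
      show ?thesis unfolding R_def by (intro tendsto_intros SQlim[OF s] SPlim[OF s])
    qed
    note dc2 = dominated_convergence[OF f2 h2 le2 cv2]
    have "integral {0..x} (R N) = (\<Sum>i<N. Q (Suc i) x)" for N
    proof -
      have "R N = (\<lambda>s. \<Sum>i<N. W s * Q i s + (V s - of_real lam) * P i s)"
        unfolding R_def SP_def SQ_def by (simp add: fun_eq_iff sum_distrib_left sum.distrib)
      then show ?thesis unfolding QS
        by (simp only:) (rule integral_sum, auto intro: rhs_int[OF cPx cQx])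
    qed
    with dc2(2) have l3: "(\<lambda>N. \<Sum>i<N. Q (Suc i) x) \<longlonglongrightarrow>
        integral {0..x} (\<lambda>s. W s * Qs s + (V s - of_real lam) * Ps s)" by simp
    have "(\<lambda>i. Q (Suc i) x) sums (Qs x - Q 0 x)"
    proof -
      have "(\<lambda>i. Q i x) sums Qs x" unfolding Qs_def using sQ[OF x] by (rule summable_sums)
      then show ?thesis by (subst sums_Suc_iff) simp
    qed
    then have l4: "(\<lambda>N. \<Sum>i<N. Q (Suc i) x) \<longlonglongrightarrow> Qs x - b" unfolding sums_def Q0 .
    have e2: "Qs x = b + integral {0..x} (\<lambda>s. W s * Qs s + (V s - of_real lam) * Ps s)"
      using LIMSEQ_unique[OF l3 l4] by simp
    show ?thesis using dc1(1) e1 dc2(1) e2 by blast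
  qed
  have QsI: "Qs integrable_on {0..L}" and RsI: "(\<lambda>s. W s * Qs s + (V s - of_real lam) * Ps s) integrable_on {0..L}"
    using eqs[of L] L by auto
  have cPs: "continuous_on {0..L} Ps"
  proof -
    have "continuous_on {0..L} (\<lambda>x. a + integral {0..x} Qs)"
      by (intro continuous_intros indefinite_integral_continuous_1[OF QsI])
    then show ?thesis by (rule continuous_on_eq) (use eqs in auto)
  qed
  have cQs: "continuous_on {0..L} Qs"
  proof -
    have "continuous_on {0..L} (\<lambda>x. b + integral {0..x} (\<lambda>s. W s * Qs s + (V s - of_real lam) * Ps s))"
      by (intro continuous_intros indefinite_integral_continuous_1[OF RsI])
    then show ?thesis by (rule continuous_on_eq) (use eqs in auto)
  qed
  have "solI L Ps Qs"
    unfolding solI_def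
  proof (intro conjI cPs cQs exI[of _ "DV \<inter> {0..L}"] ballI)
    show "finite (DV \<inter> {0..L})" using DV(1) by (rule locfin_fin)
    fix y assume y: "y \<in> {0<..<L} - DV \<inter> {0..L}"
    have yi: "y \<in> interior {0..L}" using y by auto
    have iP: "isCont Ps y" by (rule continuous_on_interior[OF cPs yi])
    have iQ: "isCont Qs y" by (rule continuous_on_interior[OF cQs yi])
    have yo: "y \<in> {0<..<L}" "y \<notin> DV" using y by auto
    have eqP: "a + integral {0..z} Qs = Ps z" if "z \<in> {0<..<L}" for z
      using eqs[of z] that by auto
    have eqQ: "b + integral {0..z} (\<lambda>s. W s * Qs s + (V s - of_real lam) * Ps s) = Qs z"
      if "z \<in> {0<..<L}" for z
      using eqs[of z] that by auto
    have "((\<lambda>z. a + integral {0..z} Qs) has_vector_derivative Qs y) (at y)"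
      using indef_deriv[OF QsI, of "{}" y] yo iP iQ
      by (auto intro!: derivative_eq_intros)
    then show "(Ps has_vector_derivative Qs y) (at y)"
      by (rule has_vector_derivative_transform_within_open[where S="{0<..<L}"]) (use yo eqP in auto)
    have iR: "isCont (\<lambda>s. W s * Qs s + (V s - of_real lam) * Ps s) y"
      using iP iQ DV(2)[OF yo(2)] W_cont by (intro continuous_intros) auto
    have "((\<lambda>z. b + integral {0..z} (\<lambda>s. W s * Qs s + (V s - of_real lam) * Ps s))
        has_vector_derivative (W y * Qs y + (V y - of_real lam) * Ps y)) (at y)"
      using indef_deriv[OF RsI, of "{}" y] yo iR
      by (auto intro!: derivative_eq_intros)
    then show "(Qs has_vector_derivative W y * Qs y + (V y - complex_of_real lam) * Ps y) (at y)"
      by (rule has_vector_derivative_transform_within_open[where S="{0<..<L}"]) (use yo eqQ in auto)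
  qed
  moreover have "Ps 0 = a" "Qs 0 = b" using eqs[of 0] L by auto
  ultimately show ?thesis by blast
qed

end


lemma eig_char:
  fixes a b c d r x y :: complex
  assumes e1: "a*x + b*y = r*x" and e2: "c*x + d*y = r*y" and nz: "x \<noteq> 0 \<or> y \<noteq> 0"
  shows "(a - r)*(d - r) = b*c"
proof -
  have h1: "((a-r)*(d-r) - b*c) * x = 0" using e1 e2 by algebra
  have h2: "((a-r)*(d-r) - b*c) * y = 0" using e1 e2 by algebra
  from nz h1 h2 have "(a-r)*(d-r) - b*c = 0" by auto
  then show ?thesis by simp
qed

lemma eig_other:
  fixes a b c d r r' x y :: complex
  assumes e1: "a*x + b*y = r*x" and e2: "c*x + d*y = r*y" and nz: "x \<noteq> 0 \<or> y \<noteq> 0"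
    and det: "a*d - c*b = r*r'" and r: "r \<noteq> 0"
  shows "\<exists>x' y'. (x' \<noteq> 0 \<or> y' \<noteq> 0) \<and> a*x' + b*y' = r'*x' \<and> c*x' + d*y' = r'*y'"
proof -
  have ch: "(a - r)*(d - r) = b*c" by (rule eig_char[OF e1 e2 nz])
  have "r * (a + d) = r * (r + r')" using ch det by algebra
  then have tr: "a + d = r + r'" using r by simp
  have ch': "(a - r')*(d - r') = b*c" using tr det by algebra
  show ?thesis
  proof (cases "b = 0")
    case False
    show ?thesis
      by (rule exI[of _ b], rule exI[of _ "r' - a"]) (use False ch' in algebra)
  next
    case b: True
    show ?thesis
    proof (cases "c = 0")
      case False
      show ?thesis
        by (rule exI[of _ "r' - d"], rule exI[of _ c]) (use False ch' b in algebra)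
    next
      case c: True
      with b ch' have "a = r' \<or> d = r'" by simp
      then show ?thesis
      proof
        assume "a = r'" then show ?thesis using b c by (intro exI[of _ 1] exI[of _ 0]) simp
      next
        assume "d = r'" then show ?thesis using b c by (intro exI[of _ 0] exI[of _ 1]) simp
      qed
    qed
  qed
qed

lemma det_jordan:
  fixes a b c d r f1 f2 p1 p2 :: complex
  assumes e1: "a*f1 + b*f2 = r*f1" and e2: "c*f1 + d*f2 = r*f2" and nz: "f1 \<noteq> 0 \<or> f2 \<noteq> 0"
    and q1: "a*p1 + b*p2 = r*p1 + f1" and q2: "c*p1 + d*p2 = r*p2 + f2"
  shows "a*d - c*b = r*r"
proof -
  have key: "(a*d - c*b) * (f1*p2 - f2*p1) = r*r * (f1*p2 - f2*p1)"
    using e1 e2 q1 q2 by algebra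
  have "f1*p2 - f2*p1 \<noteq> 0"
  proof
    assume dz: "f1*p2 - f2*p1 = 0"
    have "f1 * f1 = 0" using e1 e2 q1 q2 dz by algebra
    moreover have "f2 * f2 = 0" using e1 e2 q1 q2 dz by algebra
    ultimately show False using nz by simp
  qed
  with key show ?thesis by simp
qed

lemma det_eig2:
  fixes a b c d r1 r2 x1 x2 y1 y2 :: complex
  assumes e1: "a*x1 + b*x2 = r1*x1" and e2: "c*x1 + d*x2 = r1*x2" and nx: "x1 \<noteq> 0 \<or> x2 \<noteq> 0"
    and f1: "a*y1 + b*y2 = r2*y1" and f2: "c*y1 + d*y2 = r2*y2" and ny: "y1 \<noteq> 0 \<or> y2 \<noteq> 0"
    and r: "r1 \<noteq> r2"
  shows "a*d - c*b = r1*r2"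
proof -
  have key: "(a*d - c*b) * (x1*y2 - x2*y1) = r1*r2 * (x1*y2 - x2*y1)"
    using e1 e2 f1 f2 by algebra
  have "x1*y2 - x2*y1 \<noteq> 0"
  proof
    assume dz: "x1*y2 - x2*y1 = 0"
    have "(r1 - r2) * (x1 * y1) = 0" using e1 e2 f1 f2 dz by algebra
    moreover have "(r1 - r2) * (x1 * y2) = 0" using e1 e2 f1 f2 dz by algebra
    moreover have "(r1 - r2) * (x2 * y1) = 0" using e1 e2 f1 f2 dz by algebra
    moreover have "(r1 - r2) * (x2 * y2) = 0" using e1 e2 f1 f2 dz by algebra
    ultimately show False using nx ny r by auto
  qed
  with key show ?thesis by simp
qed


lemma floor_frac_bounds:
  fixes x g :: real
  assumes g: "g > 0"
  shows "of_int \<lfloor>x/g\<rfloor> * g \<le> x" "x < (of_int \<lfloor>x/g\<rfloor> + 1) * g"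
proof -
  have "of_int \<lfloor>x/g\<rfloor> \<le> x/g" by (rule of_int_floor_le)
  then show "of_int \<lfloor>x/g\<rfloor> * g \<le> x" using g by (simp add: le_divide_eq)
  have "x/g < of_int \<lfloor>x/g\<rfloor> + 1" by (rule real_of_int_floor_add_one_gt)
  then show "x < (of_int \<lfloor>x/g\<rfloor> + 1) * g" using pos_divide_less_eq[OF g] by blast
qed

lemma mult_shift_nat:
  fixes f :: "real \<Rightarrow> complex" and c :: complex
  assumes "\<And>x. f (x + g) = c * f x"
  shows "f (y + of_nat n * g) = c ^ n * f y"
proof (induction n)
  case 0 then show ?case by simp
next
  case (Suc n)
  have "f (y + of_nat (Suc n) * g) = f ((y + of_nat n * g) + g)" by (simp add: algebra_simps)
  also have "\<dots> = c * f (y + of_nat n * g)" by (rule assms)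
  finally show ?case using Suc by simp
qed

lemma mult_zero:
  fixes f :: "real \<Rightarrow> complex"
  assumes m: "\<And>x. f (x + g) = c * f x" and c: "c \<noteq> 0" and g: "g > 0"
    and z: "\<And>x. x \<in> {0..g} \<Longrightarrow> f x = 0"
  shows "f x = 0"
proof -
  define n where "n = \<lfloor>x/g\<rfloor>"
  define y where "y = x - of_int n * g"
  have y: "y \<in> {0..g}" using floor_frac_bounds[OF g, of x] unfolding y_def n_def
    by (auto simp: algebra_simps)
  show ?thesis
  proof (cases "n \<ge> 0")
    case True
    then have "x = y + of_nat (nat n) * g" unfolding y_def by simp
    then have "f x = c ^ nat n * f y" using mult_shift_nat[where f=f and g=g and c=c, OF m] by metis
    then show ?thesis using z[OF y] by simp
  next
    case False
    then have "y = x + of_nat (nat (- n)) * g" unfolding y_def by simp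
    then have "f y = c ^ nat (- n) * f x" using mult_shift_nat[where f=f and g=g and c=c, OF m] by metis
    then show ?thesis using z[OF y] c by simp
  qed
qed

lemma deriv_mult:
  fixes f g :: "real \<Rightarrow> complex"
  assumes d: "\<And>x. (f has_vector_derivative g x) (at x)" and m: "\<And>x. f (x + p) = c * f x"
  shows "g (x + p) = c * g x"
proof -
  have "((\<lambda>y. f (y + p)) has_vector_derivative g (x + p)) (at x)" by (rule shift_deriv[OF d])
  moreover have "(\<lambda>y. f (y + p)) = (\<lambda>y. c * f y)" using m by auto
  moreover have "((\<lambda>y. c * f y) has_vector_derivative c * g x) (at x)"
    using d[of x] by (auto intro!: derivative_eq_intros)
  ultimately show ?thesis using vector_derivative_unique_at by metis
qed

lemma qclass_eq_iff:
  assumes g: "g > 0"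
  shows "qclass g a = qclass g b \<longleftrightarrow> exp (\<i> * a * of_real g) = exp (\<i> * b * of_real g)"
proof
  assume q: "qclass g a = qclass g b"
  have "a \<in> qclass g a" unfolding qclass_def by (auto intro: exI[of _ 0])
  then have "a \<in> qclass g b" using q by simp
  then obtain m :: int where a: "a = b + of_int m * 2 * of_real pi / of_real g"
    unfolding qclass_def by auto
  have "\<i> * a * of_real g = \<i> * b * of_real g + \<i> * (of_int m * (of_real pi * 2))"
    unfolding a using g by (simp add: field_simps)
  then show "exp (\<i> * a * of_real g) = exp (\<i> * b * of_real g)" by (simp only: exp_plus_2pin)
next
  assume "exp (\<i> * a * of_real g) = exp (\<i> * b * of_real g)"
  then obtain n :: int where n: "\<i> * a * of_real g = \<i> * b * of_real g + (of_int (2 * n) * pi) * \<i>"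
    unfolding exp_eq by blast
  have a: "a = b + of_int n * 2 * of_real pi / of_real g"
  proof -
    have "\<i> * (a * of_real g) = \<i> * ((b + of_int n * 2 * of_real pi / of_real g) * of_real g)"
      using n g by (simp add: field_simps)
    then have "a * of_real g = (b + of_int n * 2 * of_real pi / of_real g) * of_real g"
      by simp
    then show ?thesis using g by simp
  qed
  have gnz: "complex_of_real g \<noteq> 0" using g by simp
  show "qclass g a = qclass g b"
  proof (rule set_eqI)
    fix z
    have "(\<exists>m::int. z = a + of_int m * 2 * of_real pi / of_real g) \<longleftrightarrow>
          (\<exists>m::int. z = b + of_int m * 2 * of_real pi / of_real g)"
    proof
      assume "\<exists>m::int. z = a + of_int m * 2 * of_real pi / of_real g"
      then obtain m :: int where "z = a + of_int m * 2 * of_real pi / of_real g" by blast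
      then have "z = b + of_int (m + n) * 2 * of_real pi / of_real g"
        unfolding a by (simp add: distrib_right add_divide_distrib)
      then show "\<exists>m::int. z = b + of_int m * 2 * of_real pi / of_real g" by blast
    next
      assume "\<exists>m::int. z = b + of_int m * 2 * of_real pi / of_real g"
      then obtain m :: int where "z = b + of_int m * 2 * of_real pi / of_real g" by blast
      then have "z = a + of_int (m - n) * 2 * of_real pi / of_real g"
        unfolding a by (simp add: left_diff_distrib diff_divide_distrib)
      then show "\<exists>m::int. z = a + of_int m * 2 * of_real pi / of_real g" by blast
    qed
    then show "z \<in> qclass g a \<longleftrightarrow> z \<in> qclass g b" unfolding qclass_def by simp
  qed
qed

context hill
begin

lemma monodromy:
  "\<exists>m11 m12 m21 m22. m11 * m22 - m21 * m12 = exp (integral {0..gam} W) \<and>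
     (\<forall>u v. solI gam u v \<longrightarrow> u gam = m11 * u 0 + m12 * v 0 \<and> v gam = m21 * u 0 + m22 * v 0)"
proof -
  have g0: "0 \<le> gam" using gpos by simp
  obtain y1 z1 where s1: "solI gam y1 z1" "y1 0 = 1" "z1 0 = 0" using exist_solI[OF g0] by blast
  obtain y2 z2 where s2: "solI gam y2 z2" "y2 0 = 0" "z2 0 = 1" using exist_solI[OF g0] by blast
  have det: "y1 gam * z2 gam - z1 gam * y2 gam = exp (integral {0..gam} W)"
    using liouville[OF s1(1) s2(1) g0] s1 s2 by simp
  have "u gam = y1 gam * u 0 + y2 gam * v 0 \<and> v gam = z1 gam * u 0 + z2 gam * v 0"
    if s: "solI gam u v" for u v
  proof -
    have c: "solI gam (\<lambda>x. u 0 * y1 x + v 0 * y2 x) (\<lambda>x. u 0 * z1 x + v 0 * z2 x)"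
      by (rule solI_lin[OF s1(1) s2(1)])
    have d: "solI gam (\<lambda>x. 1 * u x + (-1) * (u 0 * y1 x + v 0 * y2 x))
                      (\<lambda>x. 1 * v x + (-1) * (u 0 * z1 x + v 0 * z2 x))"
      by (rule solI_lin[OF s c])
    have "1 * u gam + (-1) * (u 0 * y1 gam + v 0 * y2 gam) = 0 \<and>
          1 * v gam + (-1) * (u 0 * z1 gam + v 0 * z2 gam) = 0"
      by (rule solI_unique[OF d]) (use s1 s2 g0 in auto)
    then show ?thesis by (simp add: algebra_simps)
  qed
  with det show ?thesis by blast
qed

lemma gsol_data_nz:
  assumes s: "gsol f g" and m: "\<And>x. f (x + gam) = c * f x" and c: "c \<noteq> 0"
    and nz: "f \<noteq> (\<lambda>_. 0)"
  shows "f 0 \<noteq> 0 \<or> g 0 \<noteq> 0"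
proof (rule ccontr)
  assume "\<not> (f 0 \<noteq> 0 \<or> g 0 \<noteq> 0)"
  then have z: "f 0 = 0" "g 0 = 0" by auto
  have "f x = 0 \<and> g x = 0" if "x \<in> {0..gam}" for x
    by (rule solI_unique[OF gsol_solI[OF s] z that])
  then have "f x = 0" for x using mult_zero[where f=f and c=c and g=gam, OF m c gpos] by blast
  with nz show False by auto
qed

end


lemma per_nat:
  assumes "\<And>x. f (x + g) = f x"
  shows "f (y + of_nat n * g) = f y"
proof (induction n)
  case 0 then show ?case by simp
next
  case (Suc n)
  have "f (y + of_nat (Suc n) * g) = f ((y + of_nat n * g) + g)" by (simp add: algebra_simps)
  also have "\<dots> = f (y + of_nat n * g)" by (rule assms)
  finally show ?case using Suc by simp
qed

lemma per_int:
  fixes g :: real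
  assumes p: "\<And>x. f (x + g) = f x"
  shows "f (y + of_int n * g) = f y"
proof (cases "n \<ge> 0")
  case True
  then have "y + of_int n * g = y + of_nat (nat n) * g" by simp
  then show ?thesis using per_nat[where f=f and g=g, OF p] by metis
next
  case False
  then have "y = (y + of_int n * g) + of_nat (nat (- n)) * g" by simp
  then show ?thesis using per_nat[where f=f and g=g, OF p, of "y + of_int n * g" "nat (- n)"] by metis
qed

lemma shift_deriv_minus:
  fixes f :: "real \<Rightarrow> 'a::real_normed_vector"
  assumes "(f has_vector_derivative f') (at (x - c))"
  shows "((\<lambda>y. f (y - c)) has_vector_derivative f') (at x)"
  using shift_deriv[of f f' x "- c"] assms by simp

context hill
begin

lemma exp_lin_deriv:
  "((\<lambda>x. exp (a * complex_of_real x)) has_vector_derivative (a * exp (a * complex_of_real x))) (at x)"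
proof -
  have "((\<lambda>x. a * complex_of_real x) has_vector_derivative a) (at x)"
    by (auto intro!: derivative_eq_intros)
  from exp_deriv_vec[OF this] show ?thesis .
qed


lemma Vper_int: "V (x + of_int n * gam) = V x" and Wper_int: "W (x + of_int n * gam) = W x"
  using per_int[where f=V and g=gam, OF Vper'] per_int[where f=W and g=gam, OF Wper'] by auto

lemma extend:
  assumes s: "solI gam u v" and uc: "u gam = c * u 0" and vc: "v gam = c * v 0" and c: "c \<noteq> 0"
  shows "\<exists>f g. gsol f g \<and> (\<forall>x. f (x + gam) = c * f x) \<and> f 0 = u 0 \<and> g 0 = v 0"
proof -
  from s obtain S where cu: "continuous_on {0..gam} u" and cv: "continuous_on {0..gam} v"
    and S: "finite S"
    and d: "\<And>y. y\<in>{0<..<gam} - S \<Longrightarrow> (u has_vector_derivative v y) (at y) \<and>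
        (v has_vector_derivative (W y * v y + (V y - of_real lam) * u y)) (at y)"
    unfolding solI_def by metis
  define nn where "nn x = \<lfloor>x/gam\<rfloor>" for x
  define F where "F x = c powi nn x * u (x - of_int (nn x) * gam)" for x
  define G where "G x = c powi nn x * v (x - of_int (nn x) * gam)" for x
  have g: "gam > 0" by (rule gpos)
  have nnb: "of_int (nn x) * gam \<le> x" "x < (of_int (nn x) + 1) * gam" for x
    unfolding nn_def using floor_frac_bounds[OF g] by auto
  have nn_eq: "nn x = n" if "of_int n * gam \<le> x" "x < (of_int n + 1) * gam" for x n
    unfolding nn_def
  proof (rule floor_unique)
    show "of_int n \<le> x / gam" using that g by (simp add: le_divide_eq)
    show "x / gam < of_int n + 1" using that g pos_divide_less_eq by blast
  qed
  have piece: "F x = c powi n * u (x - of_int n * gam) \<and> G x = c powi n * v (x - of_int n * gam)"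
    if x: "x \<in> {of_int n * gam .. (of_int n + 1) * gam}" for x n
  proof (cases "x < (of_int n + 1) * gam")
    case True
    then have "nn x = n" using x by (intro nn_eq) auto
    then show ?thesis unfolding F_def G_def by simp
  next
    case False
    then have x1: "x = (of_int n + 1) * gam" using x by auto
    then have "nn x = n + 1" by (intro nn_eq) (use g in auto)
    moreover have "x - of_int (n + 1) * gam = 0" using x1 by simp
    moreover have "x - of_int n * gam = gam" using x1 by (simp add: algebra_simps)
    moreover have "c powi (n + 1) = c powi n * c" using c by (simp add: power_int_add)
    ultimately show ?thesis unfolding F_def G_def using uc vc by simp
  qed
  have cont_piece: "continuous_on {of_int n * gam .. (of_int n + 1) * gam} F \<and>
                    continuous_on {of_int n * gam .. (of_int n + 1) * gam} G" for n
  proof -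
    have sub: "(\<lambda>x. x - of_int n * gam) ` {of_int n * gam .. (of_int n + 1) * gam} \<subseteq> {0..gam}"
      by (auto simp: algebra_simps)
    have c1: "continuous_on {of_int n * gam .. (of_int n + 1) * gam} (\<lambda>x. c powi n * u (x - of_int n * gam))"
      by (intro continuous_intros continuous_on_compose2[OF cu _ sub])
    have c2: "continuous_on {of_int n * gam .. (of_int n + 1) * gam} (\<lambda>x. c powi n * v (x - of_int n * gam))"
      by (intro continuous_intros continuous_on_compose2[OF cv _ sub])
    show ?thesis using c1 c2 piece
      by (metis (no_types, lifting) continuous_on_eq)
  qed
  have isc: "isCont F x \<and> isCont G x" for x
  proof -
    define n where "n = nn x"
    define I where "I = {of_int (n - 1) * gam .. (of_int (n - 1) + 1) * gam} \<union> {of_int n * gam .. (of_int n + 1) * gam}"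
    have cI: "continuous_on I F \<and> continuous_on I G"
      unfolding I_def using cont_piece[of "n - 1"] cont_piece[of n]
      by (auto intro!: continuous_on_closed_Un)
    have sub: "{(of_int n - 1) * gam .. (of_int n + 1) * gam} \<subseteq> I"
      unfolding I_def by (auto simp: algebra_simps)
    have xi: "x \<in> interior {(of_int n - 1) * gam .. (of_int n + 1) * gam}"
      using nnb[of x] g unfolding n_def by (auto simp: algebra_simps)
    show ?thesis using cI sub xi
      by (meson continuous_on_interior continuous_on_subset)
  qed
  have cF: "continuous_on UNIV F" and cG: "continuous_on UNIV G"
    using isc by (auto intro: continuous_at_imp_continuous_on)
  define S' where "S' = (S \<inter> {0..gam}) \<union> {0}"
  define E where "E = {x. x - of_int (nn x) * gam \<in> S'}"
  have fS': "finite S'" unfolding S'_def using S by simp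
  have E: "locfin E"
    unfolding locfin_def
  proof (intro allI)
    fix a b
    have "E \<inter> {a..b} \<subseteq> (\<lambda>(n, s). s + of_int n * gam) ` ({\<lfloor>a/gam\<rfloor>..\<lfloor>b/gam\<rfloor>} \<times> S')"
    proof
      fix x assume x: "x \<in> E \<inter> {a..b}"
      have "nn x \<in> {\<lfloor>a/gam\<rfloor>..\<lfloor>b/gam\<rfloor>}"
        using x g unfolding nn_def by (auto intro!: floor_mono divide_right_mono)
      moreover have "x - of_int (nn x) * gam \<in> S'" using x unfolding E_def by auto
      ultimately show "x \<in> (\<lambda>(n, s). s + of_int n * gam) ` ({\<lfloor>a/gam\<rfloor>..\<lfloor>b/gam\<rfloor>} \<times> S')"
        by (intro image_eqI[where x="(nn x, x - of_int (nn x) * gam)"]) auto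
    qed
    moreover have "finite ((\<lambda>(n, s). s + of_int n * gam) ` ({\<lfloor>a/gam\<rfloor>..\<lfloor>b/gam\<rfloor>} \<times> S'))"
      using fS' by simp
    ultimately show "finite (E \<inter> {a..b})" by (rule finite_subset)
  qed
  have dd: "(F has_vector_derivative G x) (at x) \<and>
      (G has_vector_derivative (W x * G x + (V x - of_real lam) * F x)) (at x)"
    if xE: "x \<notin> E" for x
  proof -
    define n where "n = nn x"
    define t where "t = x - of_int n * gam"
    have t: "t \<in> {0<..<gam} - S"
    proof -
      have "0 \<le> t" "t < gam" using nnb[of x] unfolding t_def n_def by (auto simp: algebra_simps)
      moreover have "t \<notin> S'" using xE unfolding E_def t_def n_def by auto
      ultimately show ?thesis unfolding S'_def by auto
    qed
    have xt: "x = t + of_int n * gam" unfolding t_def by simp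
    define Oi where "Oi = {of_int n * gam <..< (of_int n + 1) * gam}"
    have xO: "x \<in> Oi" using t unfolding Oi_def xt by (auto simp: algebra_simps)
    have eqO: "F z = c powi n * u (z - of_int n * gam) \<and> G z = c powi n * v (z - of_int n * gam)"
      if "z \<in> Oi" for z using piece[of z n] that unfolding Oi_def by auto
    have du: "((\<lambda>z. u (z - of_int n * gam)) has_vector_derivative v t) (at x)"
      by (rule shift_deriv_minus) (use d[OF t] t_def in simp)
    have dv: "((\<lambda>z. v (z - of_int n * gam)) has_vector_derivative (W t * v t + (V t - of_real lam) * u t)) (at x)"
      by (rule shift_deriv_minus) (use d[OF t] t_def in simp)
    have "((\<lambda>z. c powi n * u (z - of_int n * gam)) has_vector_derivative c powi n * v t) (at x)"
      using du by (auto intro!: derivative_eq_intros)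
    then have dF: "(F has_vector_derivative c powi n * v t) (at x)"
      by (rule has_vector_derivative_transform_within_open[where S=Oi]) (use xO eqO Oi_def in auto)
    have "((\<lambda>z. c powi n * v (z - of_int n * gam)) has_vector_derivative
        c powi n * (W t * v t + (V t - of_real lam) * u t)) (at x)"
      using dv by (auto intro!: derivative_eq_intros)
    then have dG: "(G has_vector_derivative c powi n * (W t * v t + (V t - of_real lam) * u t)) (at x)"
      by (rule has_vector_derivative_transform_within_open[where S=Oi]) (use xO eqO Oi_def in auto)
    have FG: "F x = c powi n * u t" "G x = c powi n * v t" using eqO[OF xO] unfolding t_def by auto
    have VW: "V x = V t" "W x = W t" unfolding xt by (simp_all add: Vper_int Wper_int)
    show ?thesis using dF dG FG VW by (simp add: algebra_simps)
  qed
  have dF: "(F has_vector_derivative G x) (at x)" for x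
    by (rule deriv_fill_global[OF cF cG E]) (use dd in blast)
  have "gsol F G" unfolding gsol_def using dF cG E dd by blast
  moreover have "F (x + gam) = c * F x" for x
  proof -
    have "nn (x + gam) = nn x + 1"
      using nnb[of x] by (intro nn_eq) (auto simp: algebra_simps)
    moreover have "c powi (nn x + 1) = c powi nn x * c" using c by (simp add: power_int_add)
    ultimately show ?thesis unfolding F_def by (simp add: algebra_simps)
  qed
  moreover have "F 0 = u 0" "G 0 = v 0" unfolding F_def G_def nn_def by simp_all
  ultimately show ?thesis by blast
qed

lemma Cp2_exp_mult:
  assumes s: "gsol f g"
  shows "Cp 2 (\<lambda>x. exp (a * complex_of_real x) * f x)"
proof -
  from s obtain E where df: "\<And>x. (f has_vector_derivative g x) (at x)"
    and gc: "continuous_on UNIV g" and E: "locfin E"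
    and dg: "\<And>x. x \<notin> E \<Longrightarrow> (g has_vector_derivative (W x * g x + (V x - of_real lam) * f x)) (at x)"
    unfolding gsol_def by blast
  have fc: "continuous_on UNIV f" by (rule gsol_cont[OF s])
  define e where "e x = exp (a * complex_of_real x)" for x
  have de: "(e has_vector_derivative a * e x) (at x)" for x
    unfolding e_def by (rule exp_lin_deriv)
  have ec: "continuous_on UNIV e" unfolding e_def by (intro continuous_intros)
  define p1 where "p1 x = e x * (a * f x + g x)" for x
  define p2 where "p2 x = e x * (a * a * f x + 2 * a * g x + W x * g x) + (e x * f x) * (V x - of_real lam)" for x
  have dp: "((\<lambda>x. e x * f x) has_vector_derivative p1 x) (at x)" for x
  proof -
    have "((\<lambda>x. e x * f x) has_vector_derivative (e x * g x + a * e x * f x)) (at x)"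
      by (rule has_vector_derivative_mult[OF de df])
    then show ?thesis unfolding p1_def by (simp add: algebra_simps)
  qed
  have dp1: "(p1 has_vector_derivative p2 x) (at x)" if "x \<notin> E" for x
  proof -
    have "(p1 has_vector_derivative (e x * (a * g x + (W x * g x + (V x - of_real lam) * f x)) + a * e x * (a * f x + g x))) (at x)"
      unfolding p1_def
      by (rule has_vector_derivative_mult[OF de]) (use df[of x] dg[OF that] in \<open>auto intro!: derivative_eq_intros\<close>)
    then show ?thesis unfolding p2_def by (simp add: algebra_simps)
  qed
  have cp1: "continuous_on UNIV p1" unfolding p1_def by (intro continuous_intros ec fc gc)
  have "Cp 0 (\<lambda>x. e x * (a * a * f x + 2 * a * g x + W x * g x) + (e x * f x) * (V x - of_real lam))"
    by (intro Cp0_add Cp0_cont Cp0_mult Vl_Cp0 continuous_intros ec fc gc Wc)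
  then have cp2: "Cp 0 p2" unfolding p2_def by (simp add: fun_eq_iff)
  have cp: "continuous_on UNIV (\<lambda>x. e x * f x)" by (intro continuous_intros ec fc)
  show ?thesis
    unfolding Cp2_unfold e_def[symmetric]
    using cp cp1 cp2 dp dp1 E locfin_empty by blast
qed

lemma gsol_form_a:
  assumes s: "gsol f g" and m: "\<And>x. f (x + gam) = exp (\<i> * k * of_real gam) * f x"
    and nz: "f \<noteq> (\<lambda>_. 0)"
  shows "form_a gam k f"
proof -
  define p where "p x = exp ((- (\<i> * k)) * complex_of_real x) * f x" for x
  have c2: "Cp 2 p" unfolding p_def by (rule Cp2_exp_mult[OF s])
  have fp: "f x = exp (\<i> * k * of_real x) * p x" for x
  proof -
    have "exp (\<i> * k * of_real x) * exp ((- (\<i> * k)) * complex_of_real x) = 1"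
      using exp_minus_inverse[of "\<i> * k * of_real x"] by simp
    then show ?thesis unfolding p_def by (metis mult.assoc mult_1)
  qed
  have per: "periodic_fun gam p"
    unfolding periodic_fun_def
  proof
    fix x
    have "exp ((- (\<i> * k)) * complex_of_real (x + gam)) * exp (\<i> * k * of_real gam)
        = exp ((- (\<i> * k)) * complex_of_real x)"
      by (simp add: mult_exp_exp algebra_simps)
    then show "p (x + gam) = p x" unfolding p_def m by (metis mult.assoc)
  qed
  have "p \<noteq> (\<lambda>_. 0)"
  proof
    assume "p = (\<lambda>_. 0)"
    then have "f = (\<lambda>_. 0)" using fp by auto
    with nz show False by simp
  qed
  then show ?thesis unfolding form_a_def Cp_per_def using c2 per fp by blast
qed

end


lemma exp_shift:
  "exp (\<i> * k * complex_of_real (x + g)) = exp (\<i> * k * of_real x) * exp (\<i> * k * of_real g)"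
  by (simp add: distrib_left exp_add)

context hill
begin

lemma zero_fun_deriv:
  assumes "gsol f g" "f = (\<lambda>_. 0)"
  shows "g x = 0"
proof -
  have "(f has_vector_derivative g x) (at x)" using assms(1) unfolding gsol_def by blast
  moreover have "(f has_vector_derivative 0) (at x)" using assms(2) by simp
  ultimately show ?thesis using vector_derivative_unique_at by metis
qed

lemma qm_in_Acal: "quasimomentum gam V W lam k \<Longrightarrow> qclass gam k \<in> Acal gam V W lam"
  unfolding Acal_def by blast

lemma card1_eq:
  assumes "card A = 1" "a \<in> A" "b \<in> A" shows "a = b"
  using assms by (metis card_1_singletonE singletonD)

lemma case_a:
  assumes sol: "is_solution V W lam \<psi>" and fa: "form_a gam k \<psi>"
    and card: "card (Acal gam V W lam) = 1"
  shows "exp (\<i> * k * of_real gam) * exp (\<i> * k * of_real gam) = exp (integral {0..gam} W)"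
proof -
  define \<rho> where "\<rho> = exp (\<i> * k * of_real gam)"
  define \<Delta> where "\<Delta> = exp (integral {0..gam} W)"
  have \<rho>0: "\<rho> \<noteq> 0" and \<Delta>0: "\<Delta> \<noteq> 0" unfolding \<rho>_def \<Delta>_def by simp_all
  obtain g where gs: "gsol \<psi> g" using sol_to_gsol[OF sol] by blast
  obtain m11 m12 m21 m22 where det: "m11 * m22 - m21 * m12 = \<Delta>"
    and mono: "\<And>u v. solI gam u v \<Longrightarrow> u gam = m11 * u 0 + m12 * v 0 \<and> v gam = m21 * u 0 + m22 * v 0"
    using monodromy unfolding \<Delta>_def by blast
  from fa obtain p where pp: "Cp_per gam p" and pnz: "p \<noteq> (\<lambda>_. 0)"
    and pe: "\<And>x. \<psi> x = exp (\<i> * k * of_real x) * p x"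
    unfolding form_a_def by blast
  have pper: "p (x + gam) = p x" for x using pp unfolding Cp_per_def periodic_fun_def by blast
  have mult: "\<psi> (x + gam) = \<rho> * \<psi> x" for x
    unfolding pe \<rho>_def exp_shift pper by simp
  have gmult: "g (x + gam) = \<rho> * g x" for x
    by (rule deriv_mult[where f="\<psi>" and g=g and p=gam, OF _ mult]) (use gs in \<open>auto simp: gsol_def\<close>)
  have nz: "\<psi> \<noteq> (\<lambda>_. 0)"
  proof
    assume "\<psi> = (\<lambda>_. 0)"
    then have "p x = 0" for x using pe[of x] by (metis exp_not_eq_zero mult_eq_0_iff)
    with pnz show False by auto
  qed
  have dnz: "\<psi> 0 \<noteq> 0 \<or> g 0 \<noteq> 0" by (rule gsol_data_nz[where f="\<psi>" and g=g and c="\<rho>", OF gs mult \<rho>0 nz])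
  have e1: "m11 * \<psi> 0 + m12 * g 0 = \<rho> * \<psi> 0" and e2: "m21 * \<psi> 0 + m22 * g 0 = \<rho> * g 0"
    using mono[OF gsol_solI[OF gs]] mult[of 0] gmult[of 0] by auto
  show ?thesis
  proof (rule ccontr)
    assume ne: "\<not> ?thesis"
    define r' where "r' = \<Delta> / \<rho>"
    have r'0: "r' \<noteq> 0" unfolding r'_def using \<rho>0 \<Delta>0 by simp
    have r'ne: "r' \<noteq> \<rho>"
    proof
      assume "r' = \<rho>"
      then have "\<rho> * \<rho> = \<Delta>" unfolding r'_def using \<rho>0 by (simp add: field_simps)
      with ne show False unfolding \<rho>_def \<Delta>_def by simp
    qed
    have detr: "m11 * m22 - m21 * m12 = \<rho> * r'" unfolding r'_def using det \<rho>0 by simp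
    obtain x' y' where xy: "x' \<noteq> 0 \<or> y' \<noteq> 0" and ev1: "m11 * x' + m12 * y' = r' * x'"
      and ev2: "m21 * x' + m22 * y' = r' * y'"
      using eig_other[OF e1 e2 dnz detr \<rho>0] by blast
    obtain u v where uv: "solI gam u v" "u 0 = x'" "v 0 = y'"
      using exist_solI[of gam x' y'] gpos by auto
    have ug: "u gam = r' * u 0" "v gam = r' * v 0" using mono[OF uv(1)] uv ev1 ev2 by auto
    obtain F G where FG: "gsol F G" "\<And>x. F (x + gam) = r' * F x" "F 0 = u 0" "G 0 = v 0"
      using extend[OF uv(1) ug r'0] by blast
    have Fnz: "F \<noteq> (\<lambda>_. 0)"
    proof
      assume F0: "F = (\<lambda>_. 0)"
      then have "G 0 = 0" by (rule zero_fun_deriv[OF FG(1)])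
      with F0 FG uv xy show False by auto
    qed
    define k' where "k' = Ln r' / (\<i> * of_real gam)"
    have ek': "exp (\<i> * k' * of_real gam) = r'"
    proof -
      have "\<i> * k' * of_real gam = Ln r'" unfolding k'_def using gpos by (simp add: field_simps)
      then show ?thesis using r'0 by simp
    qed
    have "form_a gam k' F" by (rule gsol_form_a[OF FG(1) _ Fnz]) (use FG(2) ek' in simp)
    then have q1: "qclass gam k' \<in> Acal gam V W lam"
      using gsol_to_sol[OF FG(1)] unfolding Acal_def quasimomentum_def by blast
    have q2: "qclass gam k \<in> Acal gam V W lam"
      using sol fa unfolding Acal_def quasimomentum_def by blast
    have "qclass gam k' \<noteq> qclass gam k"
      unfolding qclass_eq_iff[OF gpos] ek' using r'ne unfolding \<rho>_def by simp
    with card1_eq[OF card q1 q2] show False by simp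
  qed
qed

lemma case_b:
  assumes sol: "is_solution V W lam \<psi>" and fb: "form_b gam k \<psi>"
  shows "exp (\<i> * k * of_real gam) * exp (\<i> * k * of_real gam) = exp (integral {0..gam} W)"
proof -
  define \<rho> where "\<rho> = exp (\<i> * k * of_real gam)"
  define \<Delta> where "\<Delta> = exp (integral {0..gam} W)"
  have \<rho>0: "\<rho> \<noteq> 0" unfolding \<rho>_def by simp
  obtain g where gs: "gsol \<psi> g" using sol_to_gsol[OF sol] by blast
  obtain m11 m12 m21 m22 where det: "m11 * m22 - m21 * m12 = \<Delta>"
    and mono: "\<And>u v. solI gam u v \<Longrightarrow> u gam = m11 * u 0 + m12 * v 0 \<and> v gam = m21 * u 0 + m22 * v 0"
    using monodromy unfolding \<Delta>_def by blast
  from fb obtain p1 p2 where pp: "Cp_per gam p1" "Cp_per gam p2" and pnz: "p2 \<noteq> (\<lambda>_. 0)"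
    and pe: "\<And>x. \<psi> x = exp (\<i> * k * of_real x) * (p1 x + of_real x * p2 x)"
    unfolding form_b_def by blast
  have pper: "p1 (x + gam) = p1 x" "p2 (x + gam) = p2 x" for x
    using pp unfolding Cp_per_def periodic_fun_def by blast+
  define f where "f x = 1 * \<psi> (x + gam) + (- \<rho>) * \<psi> x" for x
  define gf where "gf x = 1 * g (x + gam) + (- \<rho>) * g x" for x
  have fs: "gsol f gf" unfolding f_def gf_def by (rule gsol_lin[OF gsol_shift[OF gs] gs])
  have fe: "f x = \<rho> * of_real gam * exp (\<i> * k * of_real x) * p2 x" for x
    unfolding f_def pe exp_shift pper \<rho>_def by (simp add: algebra_simps)
  have fmult: "f (x + gam) = \<rho> * f x" for x
    unfolding fe exp_shift pper \<rho>_def by (simp add: algebra_simps)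
  have gfmult: "gf (x + gam) = \<rho> * gf x" for x
    by (rule deriv_mult[where f=f and g=gf and p=gam, OF _ fmult]) (use fs in \<open>auto simp: gsol_def\<close>)
  have fnz: "f \<noteq> (\<lambda>_. 0)"
  proof
    assume "f = (\<lambda>_. 0)"
    then have "p2 x = 0" for x using fe[of x] \<rho>0 gpos by simp
    with pnz show False by auto
  qed
  have dnz: "f 0 \<noteq> 0 \<or> gf 0 \<noteq> 0" by (rule gsol_data_nz[where f=f and g=gf and c="\<rho>", OF fs fmult \<rho>0 fnz])
  have e1: "m11 * f 0 + m12 * gf 0 = \<rho> * f 0" and e2: "m21 * f 0 + m22 * gf 0 = \<rho> * gf 0"
    using mono[OF gsol_solI[OF fs]] fmult[of 0] gfmult[of 0] by auto
  have q1: "m11 * \<psi> 0 + m12 * g 0 = \<rho> * \<psi> 0 + f 0" and q2: "m21 * \<psi> 0 + m22 * g 0 = \<rho> * g 0 + gf 0"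
    using mono[OF gsol_solI[OF gs]] unfolding f_def gf_def by auto
  have "m11 * m22 - m21 * m12 = \<rho> * \<rho>" by (rule det_jordan[OF e1 e2 dnz q1 q2])
  then show ?thesis using det unfolding \<rho>_def \<Delta>_def by simp
qed

lemma case_c:
  assumes sol: "is_solution V W lam \<psi>" and fc: "form_c gam k1 k2 \<psi>"
  shows "exp (\<i> * k1 * of_real gam) * exp (\<i> * k2 * of_real gam) = exp (integral {0..gam} W)"
proof -
  define r1 where "r1 = exp (\<i> * k1 * of_real gam)"
  define r2 where "r2 = exp (\<i> * k2 * of_real gam)"
  define \<Delta> where "\<Delta> = exp (integral {0..gam} W)"
  have r10: "r1 \<noteq> 0" and r20: "r2 \<noteq> 0" unfolding r1_def r2_def by simp_all
  obtain g where gs: "gsol \<psi> g" using sol_to_gsol[OF sol] by blast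
  obtain m11 m12 m21 m22 where det: "m11 * m22 - m21 * m12 = \<Delta>"
    and mono: "\<And>u v. solI gam u v \<Longrightarrow> u gam = m11 * u 0 + m12 * v 0 \<and> v gam = m21 * u 0 + m22 * v 0"
    using monodromy unfolding \<Delta>_def by blast
  from fc obtain p1 p2 where qne: "qclass gam k1 \<noteq> qclass gam k2"
    and pp: "Cp_per gam p1" "Cp_per gam p2" and pnz: "p1 \<noteq> (\<lambda>_. 0)" "p2 \<noteq> (\<lambda>_. 0)"
    and pe: "\<And>x. \<psi> x = exp (\<i> * k1 * of_real x) * p1 x + exp (\<i> * k2 * of_real x) * p2 x"
    unfolding form_c_def by blast
  have rne: "r1 \<noteq> r2" using qne unfolding qclass_eq_iff[OF gpos] r1_def r2_def .
  have rd: "r1 - r2 \<noteq> 0" "r2 - r1 \<noteq> 0" using rne by auto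
  have pper: "p1 (x + gam) = p1 x" "p2 (x + gam) = p2 x" for x
    using pp unfolding Cp_per_def periodic_fun_def by blast+
  define e1 where "e1 x = exp (\<i> * k1 * of_real x) * p1 x" for x
  define e2 where "e2 x = exp (\<i> * k2 * of_real x) * p2 x" for x
  have pe': "\<psi> x = e1 x + e2 x" for x unfolding pe e1_def e2_def ..
  have e1m: "e1 (x + gam) = r1 * e1 x" and e2m: "e2 (x + gam) = r2 * e2 x" for x
    unfolding e1_def e2_def r1_def r2_def exp_shift pper by simp_all
  have e1nz: "e1 \<noteq> (\<lambda>_. 0)"
  proof
    assume "e1 = (\<lambda>_. 0)"
    then have "p1 x = 0" for x unfolding e1_def by (metis exp_not_eq_zero mult_eq_0_iff)
    with pnz show False by auto
  qed
  have e2nz: "e2 \<noteq> (\<lambda>_. 0)"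
  proof
    assume "e2 = (\<lambda>_. 0)"
    then have "p2 x = 0" for x unfolding e2_def by (metis exp_not_eq_zero mult_eq_0_iff)
    with pnz show False by auto
  qed
  define F1 where "F1 x = (1 / (r1 - r2)) * \<psi> (x + gam) + (- r2 / (r1 - r2)) * \<psi> x" for x
  define G1 where "G1 x = (1 / (r1 - r2)) * g (x + gam) + (- r2 / (r1 - r2)) * g x" for x
  define F2 where "F2 x = (1 / (r2 - r1)) * \<psi> (x + gam) + (- r1 / (r2 - r1)) * \<psi> x" for x
  define G2 where "G2 x = (1 / (r2 - r1)) * g (x + gam) + (- r1 / (r2 - r1)) * g x" for x
  have s1: "gsol F1 G1" unfolding F1_def G1_def by (rule gsol_lin[OF gsol_shift[OF gs] gs])
  have s2: "gsol F2 G2" unfolding F2_def G2_def by (rule gsol_lin[OF gsol_shift[OF gs] gs])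
  have F1e: "F1 = e1"
  proof
    fix x
    have "F1 x * (r1 - r2) = e1 x * (r1 - r2)"
      unfolding F1_def pe' e1m e2m using rd by (simp add: divide_simps) (simp add: algebra_simps)
    then show "F1 x = e1 x" using rd by simp
  qed
  have F2e: "F2 = e2"
  proof
    fix x
    have "F2 x * (r2 - r1) = e2 x * (r2 - r1)"
      unfolding F2_def pe' e1m e2m using rd by (simp add: divide_simps) (simp add: algebra_simps)
    then show "F2 x = e2 x" using rd by simp
  qed
  have F1m: "F1 (x + gam) = r1 * F1 x" for x unfolding F1e by (rule e1m)
  have F2m: "F2 (x + gam) = r2 * F2 x" for x unfolding F2e by (rule e2m)
  have G1m: "G1 (x + gam) = r1 * G1 x" for x
    by (rule deriv_mult[where f=F1 and g=G1 and p=gam, OF _ F1m]) (use s1 in \<open>auto simp: gsol_def\<close>)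
  have G2m: "G2 (x + gam) = r2 * G2 x" for x
    by (rule deriv_mult[where f=F2 and g=G2 and p=gam, OF _ F2m]) (use s2 in \<open>auto simp: gsol_def\<close>)
  have n1: "F1 0 \<noteq> 0 \<or> G1 0 \<noteq> 0" by (rule gsol_data_nz[where f=F1 and g=G1 and c=r1, OF s1 F1m r10]) (use F1e e1nz in simp)
  have n2: "F2 0 \<noteq> 0 \<or> G2 0 \<noteq> 0" by (rule gsol_data_nz[where f=F2 and g=G2 and c=r2, OF s2 F2m r20]) (use F2e e2nz in simp)
  have a1: "m11 * F1 0 + m12 * G1 0 = r1 * F1 0" "m21 * F1 0 + m22 * G1 0 = r1 * G1 0"
    using mono[OF gsol_solI[OF s1]] F1m[of 0] G1m[of 0] by auto
  have a2: "m11 * F2 0 + m12 * G2 0 = r2 * F2 0" "m21 * F2 0 + m22 * G2 0 = r2 * G2 0"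
    using mono[OF gsol_solI[OF s2]] F2m[of 0] G2m[of 0] by auto
  have "m11 * m22 - m21 * m12 = r1 * r2" by (rule det_eig2[OF a1 n1 a2 n2 rne])
  then show ?thesis using det unfolding r1_def r2_def \<Delta>_def by simp
qed

end


lemma class_from_sq:
  fixes gam :: real and k I :: complex
  assumes g: "gam > 0" and h: "exp (\<i> * k * of_real gam) * exp (\<i> * k * of_real gam) = exp I"
  shows "qclass gam k = qclass gam (I / of_real gam / (2 * \<i>)) \<or>
         qclass gam k = qclass gam (I / of_real gam / (2 * \<i>) + of_real pi / of_real gam)"
proof -
  have gnz: "complex_of_real gam \<noteq> 0" using g by simp
  have "exp (\<i> * k * of_real gam + \<i> * k * of_real gam) = exp I" using h by (simp only: exp_add)
  then obtain n :: int where n: "\<i> * k * of_real gam + \<i> * k * of_real gam = I + (of_int (2 * n) * pi) * \<i>"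
    unfolding exp_eq by blast
  define a where "a = I / of_real gam / (2 * \<i>)"
  have ia: "\<i> * a * of_real gam = I / 2" unfolding a_def using gnz by (simp add: field_simps)
  have kx: "\<i> * k * of_real gam = I / 2 + of_int n * pi * \<i>"
  proof -
    have "2 * (\<i> * k * of_real gam) = 2 * (I / 2 + of_int n * pi * \<i>)"
      using n by (simp add: algebra_simps)
    moreover have "(2::complex) \<noteq> 0" by simp
    ultimately show ?thesis using mult_left_cancel[of "2::complex"] by blast
  qed
  define m where "m = n div 2"
  have nm: "n = 2 * m + n mod 2" unfolding m_def by simp
  have "n mod 2 = 0 \<or> n mod 2 = 1" by auto
  then show ?thesis
  proof
    assume "n mod 2 = 0"
    then have nn: "n = 2 * m" using nm by simp
    have "\<i> * k * of_real gam = \<i> * a * of_real gam + \<i> * (of_int m * (of_real pi * 2))"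
      unfolding kx ia nn by (simp add: algebra_simps)
    then have "exp (\<i> * k * of_real gam) = exp (\<i> * a * of_real gam)" by (simp only: exp_plus_2pin)
    then show ?thesis unfolding qclass_eq_iff[OF g] a_def by blast
  next
    assume "n mod 2 = 1"
    then have nn: "n = 2 * m + 1" using nm by simp
    have ib: "\<i> * (a + of_real pi / of_real gam) * of_real gam = I / 2 + pi * \<i>"
      using ia gnz by (simp add: algebra_simps)
    have "\<i> * k * of_real gam = \<i> * (a + of_real pi / of_real gam) * of_real gam + \<i> * (of_int m * (of_real pi * 2))"
      unfolding kx ib nn by (simp add: algebra_simps)
    then have "exp (\<i> * k * of_real gam) = exp (\<i> * (a + of_real pi / of_real gam) * of_real gam)"
      by (simp only: exp_plus_2pin)
    then show ?thesis unfolding qclass_eq_iff[OF g] a_def by blast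
  qed
qed

theorem theorem3p6:
  fixes \<gamma> :: real and V W :: "real \<Rightarrow> complex" and lam :: real
  assumes "\<gamma> > 0"
    and "Cp 0 V" and "periodic_fun \<gamma> V"
    and "continuous_on UNIV W" and "periodic_fun \<gamma> W"
  defines "Wbar \<equiv> integral {0..\<gamma>} W / complex_of_real \<gamma>"
  shows "(lam \<in> sigma_g1 \<gamma> V W \<union> sigma_g2 \<gamma> V W \<longrightarrow>
            Acal \<gamma> V W lam = {qclass \<gamma> (Wbar / (2 * \<i>))} \<or>
            Acal \<gamma> V W lam = {qclass \<gamma> (Wbar / (2 * \<i>) + of_real pi / of_real \<gamma>)})
       \<and> (lam \<in> sigma_g3 \<gamma> V W \<longrightarrow>
            (\<exists>k1 k2. Acal \<gamma> V W lam = {qclass \<gamma> k1, qclass \<gamma> k2} \<and>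
                     qclass \<gamma> (k1 + k2) = qclass \<gamma> (Wbar / \<i>)))"
proof -
  have g: "\<gamma> > 0" by (rule assms(1))
  interpret H: hill \<gamma> V W lam
    by unfold_locales (use assms(1-5) in auto)
  have Wb: "Wbar = integral {0..\<gamma>} W / of_real \<gamma>" by (simp add: Wbar_def)
  show ?thesis
  proof (intro conjI impI)
    assume "lam \<in> sigma_g1 \<gamma> V W \<union> sigma_g2 \<gamma> V W"
    then obtain \<psi> k where sol: "is_solution V W lam \<psi>" and f: "form_a \<gamma> k \<psi> \<or> form_b \<gamma> k \<psi>"
      and card: "card (Acal \<gamma> V W lam) = 1"
      unfolding sigma_g1_def sigma_g2_def by blast
    have sq: "exp (\<i> * k * of_real \<gamma>) * exp (\<i> * k * of_real \<gamma>) = exp (integral {0..\<gamma>} W)"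
      using f H.case_a[OF sol _ card] H.case_b[OF sol] by blast
    have mem: "qclass \<gamma> k \<in> Acal \<gamma> V W lam"
      using sol f unfolding Acal_def quasimomentum_def by blast
    have A: "Acal \<gamma> V W lam = {qclass \<gamma> k}"
      using card mem by (metis card_1_singletonE singletonD)
    show "Acal \<gamma> V W lam = {qclass \<gamma> (Wbar / (2 * \<i>))} \<or>
          Acal \<gamma> V W lam = {qclass \<gamma> (Wbar / (2 * \<i>) + of_real pi / of_real \<gamma>)}"
      using class_from_sq[OF g sq] unfolding A Wb by simp
  next
    assume "lam \<in> sigma_g3 \<gamma> V W"
    then obtain \<psi> k1 k2 where sol: "is_solution V W lam \<psi>" and f: "form_c \<gamma> k1 k2 \<psi>"
      and card: "card (Acal \<gamma> V W lam) = 2"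
      unfolding sigma_g3_def by blast
    have ne: "qclass \<gamma> k1 \<noteq> qclass \<gamma> k2" using f unfolding form_c_def by blast
    have m1: "qclass \<gamma> k1 \<in> Acal \<gamma> V W lam"
      using sol f unfolding Acal_def quasimomentum_def by blast
    have m2: "qclass \<gamma> k2 \<in> Acal \<gamma> V W lam"
      using sol f unfolding Acal_def quasimomentum_def by blast
    have fin: "finite (Acal \<gamma> V W lam)" using card by (intro card_ge_0_finite) simp
    have A: "Acal \<gamma> V W lam = {qclass \<gamma> k1, qclass \<gamma> k2}"
    proof (rule sym, rule card_subset_eq[OF fin])
      show "{qclass \<gamma> k1, qclass \<gamma> k2} \<subseteq> Acal \<gamma> V W lam" using m1 m2 by blast
      show "card {qclass \<gamma> k1, qclass \<gamma> k2} = card (Acal \<gamma> V W lam)" using ne card by simp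
    qed
    have e: "exp (\<i> * k1 * of_real \<gamma>) * exp (\<i> * k2 * of_real \<gamma>) = exp (integral {0..\<gamma>} W)"
      by (rule H.case_c[OF sol f])
    have "exp (\<i> * (k1 + k2) * of_real \<gamma>) = exp (\<i> * (Wbar / \<i>) * of_real \<gamma>)"
    proof -
      have "\<i> * (Wbar / \<i>) * of_real \<gamma> = integral {0..\<gamma>} W" unfolding Wb using g by simp
      moreover have "exp (\<i> * (k1 + k2) * of_real \<gamma>) = exp (\<i> * k1 * of_real \<gamma>) * exp (\<i> * k2 * of_real \<gamma>)"
        by (simp add: distrib_left distrib_right exp_add)
      ultimately show ?thesis using e by simp
    qed
    then have "qclass \<gamma> (k1 + k2) = qclass \<gamma> (Wbar / \<i>)" unfolding qclass_eq_iff[OF g] .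
    with A show "\<exists>k1 k2. Acal \<gamma> V W lam = {qclass \<gamma> k1, qclass \<gamma> k2} \<and>
                     qclass \<gamma> (k1 + k2) = qclass \<gamma> (Wbar / \<i>)" by blast
  qed
qed


end
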